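(* For every $q\in\mathbb{K}$, $\mathbf{PQSym}^*(q)=(\mathbf{PQSym}^*,\prec_q,\cdot_q,\succ_q)$ is a $q$-tridendriform algebra, and equipped with the coproduct $\Delta$ it is a $q$-tridendriform bialgebra.
   Context: Words: a map $h:[n]\to\mathbb{Z}_{>0}$ is identified with $(h(1),\dots,h(n))$; $\max(h)$ its largest value; $hk$ concatenation; $\cap(h,k)=|\mathrm{Im}(h)\cap\mathrm{Im}(k)|$. A map $f^\uparrow:[n]\to[n]$ is a non-decreasing parking function if it is non-decreasing and $f^\uparrow(i)\le i$ for all $i$; an $n$-parking function is a composite $f=f^\uparrow\circ\sigma$ with $f^\uparrow$ a non-decreasing parking function and $\sigma\in S_n$. $PF_n$ denotes the set of $n$-parking functions and $\mathbf{PQSym}^*=\bigoplus_{n\ge1}\mathbb{K}[PF_n]$. Parkization: for a non-decreasing word $f^\uparrow$ of length $n$, $\mathrm{Park}(f^\uparrow)(1)=1$ and $\mathrm{Park}(f^\uparrow)(j)=\min\{\mathrm{Park}(f^\uparrow)(j-1)+f^\uparrow(j)-f^\uparrow(j-1),\ j\}$ for $j>1$; for an arbitrary word $f=f^\uparrow\circ\sigma$ with $f^\uparrow$ non-decreasing and $\sigma$ a permutation, $\mathrm{Park}(f)=\mathrm{Park}(f^\uparrow)\circ\sigma$. Products: for $f,g$ parking functions, $f\prec_qg=\sum_{\max(h)>\max(k)}q^{\cap(h,k)}hk$, $f\cdot_qg=\sum_{\max(h)=\max(k)}q^{\cap(h,k)-1}hk$, $f\succ_qg=\sum_{\max(h)<\max(k)}q^{\cap(h,k)}hk$,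 sums over pairs of words $(h,k)$ with $hk$ a parking function, $\mathrm{Park}(h)=f$, $\mathrm{Park}(k)=g$. Coproduct: $f\times_Pg:=(f(1),\dots,f(n),g(1)+n,\dots,g(m)+n)$ for $f\in PF_n$, $g\in PF_m$. On $\mathbf{PQSym}^*_+=\mathbf{PQSym}^*\oplus\mathbb{K}1$, $\Delta(1)=1\otimes1$ and for $f\in PF_n$, $\Delta(f)=\sum_jf^j_{(1)}\otimes f^j_{(2)}$, the sum over all $0\le j\le n$ for which there exist $f^j_{(1)}\in PF_j$, $f^j_{(2)}\in PF_{n-j}$ and a permutation $\delta_j\in S_n$ whose inverse is a $(j,n-j)$-shuffle (i.e. $\delta_j^{-1}$ is increasing on $\{1,\dots,j\}$ and on $\{j+1,\dots,n\}$) with $f=(f^j_{(1)}\times_Pf^j_{(2)})\circ\delta_j$ (these are unique when they exist; $PF_0=\{1\}$). $q$-tridendriform algebra: bilinear $\prec,\cdot,\succ$ satisfying (1) $(a\prec b)\prec c=a\prec(b\prec c+b\succ c+q\,b\cdot c)$; (2) $(a\succ b)\prec c=a\succ(b\prec c)$; (3) $(a\prec b+a\succ b+q\,a\cdot b)\succ c=a\succ(b\succ c)$; (4) $(a\cdot b)\cdot c=a\cdot(b\cdot c)$; (5) $(a\succ b)\cdot c=a\succ(b\cdot c)$; (6) $(a\prec b)\cdot c=a\cdot(b\succ c)$; (7) $(a\cdot b)\prec c=a\cdot(b\prec c)$; $*=\prec+q\,\cdot+\succ$. $q$-tridendriform bialgebra: with unit conventions $x\succ1=x\cdot1=1\cdot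 x=1\prec x=0$, $1\succ x=x=x\prec1$, $1*x=x*1=x$, $(x*y)\otimes(1\circ1):=(x\circ y)\otimes1$, a linear $\Delta:H_+\to H_+\otimes H_+$ with $\Delta(1)=1\otimes1$, counit conditions, and $\Delta(x\circ y)=\sum(x_{(1)}*y_{(1)})\otimes(x_{(2)}\circ y_{(2)})$ for $\circ\in\{\succ,\cdot,\prec\}$. *)

theory Defs
  imports "HOL-Library.Poly_Mapping" "HOL-Combinatorics.Permutations"
begin

(* Words h : [n] -> Z_{>0} are nat lists; position i (1-based in the paper) is
   index i-1 of the list; values are kept as in the paper (positive). *)

definition nd_pf :: "nat list \<Rightarrow> bool" where
  "nd_pf f \<longleftrightarrow> sorted f \<and> (\<forall>i<length f. 1 \<le> f ! i \<and> f ! i \<le> Suc i)"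

definition is_pf :: "nat list \<Rightarrow> bool" where
  "is_pf f \<longleftrightarrow> (\<exists>fu \<sigma>. nd_pf fu \<and> length fu = length f \<and> \<sigma> permutes {..<length f} \<and>
                    (\<forall>i<length f. f ! i = fu ! (\<sigma> i)))"

(* pu f j = Park(f_up)(j+1), 0-based index j *)
fun pu :: "nat list \<Rightarrow> nat \<Rightarrow> nat" where
  "pu f 0 = 1"
| "pu f (Suc j) = min (pu f j + f ! (Suc j) - f ! j) (Suc (Suc j))"

definition park_up :: "nat list \<Rightarrow> nat list" where
  "park_up f = map (pu f) [0..<length f]"

definition park :: "nat list \<Rightarrow> nat list" where
  "park f = (let fu = sort f;
                 \<sigma> = (SOME \<sigma>. \<sigma> permutes {..<length f} \<and> (\<forall>i<length f. f ! i = fu ! (\<sigma> i)))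
             in map (\<lambda>i. park_up fu ! (\<sigma> i)) [0..<length f])"

definition smult_pm :: "'a::semiring_0 \<Rightarrow> ('k \<Rightarrow>\<^sub>0 'a) \<Rightarrow> ('k \<Rightarrow>\<^sub>0 'a)" where
  "smult_pm c x = Poly_Mapping.map (\<lambda>v. c * v) x"

definition PQS :: "(nat list \<Rightarrow>\<^sub>0 'a::zero) set" where
  "PQS = {x. Poly_Mapping.keys x \<subseteq> {f. is_pf f \<and> f \<noteq> []}}"

(* PQSym^*_+ = PQSym^* + K 1, the unit 1 being the empty parking function (PF_0) *)
definition PQSplus :: "(nat list \<Rightarrow>\<^sub>0 'a::zero) set" where
  "PQSplus = {x. Poly_Mapping.keys x \<subseteq> {f. is_pf f}}"

(* H_+ (x) H_+ : finitely supported functions on pairs of basis elements *)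
definition TensPlus :: "(nat list \<times> nat list \<Rightarrow>\<^sub>0 'a::zero) set" where
  "TensPlus = {t. Poly_Mapping.keys t \<subseteq> {(f,g). is_pf f \<and> is_pf g}}"

definition bilin :: "(nat list \<Rightarrow> nat list \<Rightarrow> ('k \<Rightarrow>\<^sub>0 'a::comm_ring_1))
     \<Rightarrow> (nat list \<Rightarrow>\<^sub>0 'a) \<Rightarrow> (nat list \<Rightarrow>\<^sub>0 'a) \<Rightarrow> ('k \<Rightarrow>\<^sub>0 'a)" where
  "bilin B x y = (\<Sum>f\<in>Poly_Mapping.keys x. \<Sum>g\<in>Poly_Mapping.keys y.
                    smult_pm (Poly_Mapping.lookup x f * Poly_Mapping.lookup y g) (B f g))"

definition tens :: "(nat list \<Rightarrow>\<^sub>0 'a::comm_ring_1) \<Rightarrow> (nat list \<Rightarrow>\<^sub>0 'a) \<Rightarrow> (nat list \<times> nat list \<Rightarrow>\<^sub>0 'a)" where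
  "tens u v = bilin (\<lambda>s t. Poly_Mapping.single (s, t) 1) u v"

definition park_pairs :: "(nat \<Rightarrow> nat \<Rightarrow> bool) \<Rightarrow> nat list \<Rightarrow> nat list \<Rightarrow> (nat list \<times> nat list) set" where
  "park_pairs R f g = {(h, k). is_pf (h @ k) \<and> park h = f \<and> park k = g \<and> R (Max (set h)) (Max (set k))}"

definition cap :: "nat list \<Rightarrow> nat list \<Rightarrow> nat" where
  "cap h k = card (set h \<inter> set k)"

definition prec_b :: "'a::comm_ring_1 \<Rightarrow> nat list \<Rightarrow> nat list \<Rightarrow> (nat list \<Rightarrow>\<^sub>0 'a)" where
  "prec_b q f g = (\<Sum>(h, k)\<in>park_pairs (\<lambda>a b. a > b) f g.
                     smult_pm (q ^ cap h k) (Poly_Mapping.single (h @ k) 1))"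

definition dot_b :: "'a::comm_ring_1 \<Rightarrow> nat list \<Rightarrow> nat list \<Rightarrow> (nat list \<Rightarrow>\<^sub>0 'a)" where
  "dot_b q f g = (\<Sum>(h, k)\<in>park_pairs (\<lambda>a b. a = b) f g.
                     smult_pm (q ^ (cap h k - 1)) (Poly_Mapping.single (h @ k) 1))"

definition succ_b :: "'a::comm_ring_1 \<Rightarrow> nat list \<Rightarrow> nat list \<Rightarrow> (nat list \<Rightarrow>\<^sub>0 'a)" where
  "succ_b q f g = (\<Sum>(h, k)\<in>park_pairs (\<lambda>a b. a < b) f g.
                     smult_pm (q ^ cap h k) (Poly_Mapping.single (h @ k) 1))"

definition Prec :: "'a::comm_ring_1 \<Rightarrow> (nat list \<Rightarrow>\<^sub>0 'a) \<Rightarrow> (nat list \<Rightarrow>\<^sub>0 'a) \<Rightarrow> (nat list \<Rightarrow>\<^sub>0 'a)" where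
  "Prec q = bilin (prec_b q)"
definition Dot :: "'a::comm_ring_1 \<Rightarrow> (nat list \<Rightarrow>\<^sub>0 'a) \<Rightarrow> (nat list \<Rightarrow>\<^sub>0 'a) \<Rightarrow> (nat list \<Rightarrow>\<^sub>0 'a)" where
  "Dot q = bilin (dot_b q)"
definition Succ :: "'a::comm_ring_1 \<Rightarrow> (nat list \<Rightarrow>\<^sub>0 'a) \<Rightarrow> (nat list \<Rightarrow>\<^sub>0 'a) \<Rightarrow> (nat list \<Rightarrow>\<^sub>0 'a)" where
  "Succ q = bilin (succ_b q)"

definition q_tridendriform :: "'a::comm_ring_1 \<Rightarrow> (nat list \<Rightarrow>\<^sub>0 'a) set
   \<Rightarrow> ((nat list \<Rightarrow>\<^sub>0 'a) \<Rightarrow> (nat list \<Rightarrow>\<^sub>0 'a) \<Rightarrow> (nat list \<Rightarrow>\<^sub>0 'a))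
   \<Rightarrow> ((nat list \<Rightarrow>\<^sub>0 'a) \<Rightarrow> (nat list \<Rightarrow>\<^sub>0 'a) \<Rightarrow> (nat list \<Rightarrow>\<^sub>0 'a))
   \<Rightarrow> ((nat list \<Rightarrow>\<^sub>0 'a) \<Rightarrow> (nat list \<Rightarrow>\<^sub>0 'a) \<Rightarrow> (nat list \<Rightarrow>\<^sub>0 'a)) \<Rightarrow> bool" where
  "q_tridendriform q A pr dt sc \<longleftrightarrow>
     (\<forall>a\<in>A. \<forall>b\<in>A. pr a b \<in> A \<and> dt a b \<in> A \<and> sc a b \<in> A) \<and>
     (\<forall>a\<in>A. \<forall>b\<in>A. \<forall>c\<in>A.
        pr (pr a b) c = pr a (pr b c + sc b c + smult_pm q (dt b c)) \<and>
        pr (sc a b) c = sc a (pr b c) \<and>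
        sc (pr a b + sc a b + smult_pm q (dt a b)) c = sc a (sc b c) \<and>
        dt (dt a b) c = dt a (dt b c) \<and>
        dt (sc a b) c = sc a (dt b c) \<and>
        dt (pr a b) c = dt a (sc b c) \<and>
        pr (dt a b) c = dt a (pr b c))"

definition times_P :: "nat list \<Rightarrow> nat list \<Rightarrow> nat list" where
  "times_P f g = f @ map (\<lambda>x. x + length f) g"

definition cop_terms :: "nat list \<Rightarrow> (nat list \<times> nat list) set" where
  "cop_terms f = {(f1, f2). is_pf f1 \<and> is_pf f2 \<and> length f1 + length f2 = length f \<and>
      (\<exists>\<delta>. \<delta> permutes {..<length f} \<and>
           strict_mono_on {..<length f1} (inv \<delta>) \<and>
           strict_mono_on {length f1..<length f} (inv \<delta>) \<and>
           (\<forall>i<length f. f ! i = times_P f1 f2 ! (\<delta> i)))}"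

definition cop_b :: "nat list \<Rightarrow> (nat list \<times> nat list \<Rightarrow>\<^sub>0 'a::comm_ring_1)" where
  "cop_b f = (if f = [] then Poly_Mapping.single ([], []) 1
              else (\<Sum>p\<in>cop_terms f. Poly_Mapping.single p 1))"

definition Cop :: "(nat list \<Rightarrow>\<^sub>0 'a::comm_ring_1) \<Rightarrow> (nat list \<times> nat list \<Rightarrow>\<^sub>0 'a)" where
  "Cop x = (\<Sum>f\<in>Poly_Mapping.keys x. smult_pm (Poly_Mapping.lookup x f) (cop_b f))"

definition counit :: "(nat list \<Rightarrow>\<^sub>0 'a::comm_ring_1) \<Rightarrow> 'a" where
  "counit x = Poly_Mapping.lookup x []"

(* (counit (x) id) and (id (x) counit), identifying K (x) H = H = H (x) K *)
definition counit_id :: "(nat list \<times> nat list \<Rightarrow>\<^sub>0 'a::comm_ring_1) \<Rightarrow> (nat list \<Rightarrow>\<^sub>0 'a)" where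
  "counit_id t = (\<Sum>p\<in>Poly_Mapping.keys t.
       smult_pm (Poly_Mapping.lookup t p * counit (Poly_Mapping.single (fst p) 1))
                (Poly_Mapping.single (snd p) 1))"

definition id_counit :: "(nat list \<times> nat list \<Rightarrow>\<^sub>0 'a::comm_ring_1) \<Rightarrow> (nat list \<Rightarrow>\<^sub>0 'a)" where
  "id_counit t = (\<Sum>p\<in>Poly_Mapping.keys t.
       smult_pm (Poly_Mapping.lookup t p * counit (Poly_Mapping.single (snd p) 1))
                (Poly_Mapping.single (fst p) 1))"

(* [] is the unit 1 *)
definition ext_prec :: "'a::comm_ring_1 \<Rightarrow> nat list \<Rightarrow> nat list \<Rightarrow> (nat list \<Rightarrow>\<^sub>0 'a)" where
  "ext_prec q a c = (if c = [] then Poly_Mapping.single a 1 else if a = [] then 0 else prec_b q a c)"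

definition ext_succ :: "'a::comm_ring_1 \<Rightarrow> nat list \<Rightarrow> nat list \<Rightarrow> (nat list \<Rightarrow>\<^sub>0 'a)" where
  "ext_succ q a c = (if a = [] then Poly_Mapping.single c 1 else if c = [] then 0 else succ_b q a c)"

definition ext_dot :: "'a::comm_ring_1 \<Rightarrow> nat list \<Rightarrow> nat list \<Rightarrow> (nat list \<Rightarrow>\<^sub>0 'a)" where
  "ext_dot q a c = (if a = [] \<or> c = [] then 0 else dot_b q a c)"

definition ext_star :: "'a::comm_ring_1 \<Rightarrow> nat list \<Rightarrow> nat list \<Rightarrow> (nat list \<Rightarrow>\<^sub>0 'a)" where
  "ext_star q a c = (if a = [] then Poly_Mapping.single c 1
                     else if c = [] then Poly_Mapping.single a 1
                     else prec_b q a c + smult_pm q (dot_b q a c) + succ_b q a c)"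

(* (a (x) b) , (c (x) d)  |->  (a * c) (x) (b o d), with (x*y) (x) (1 o 1) := (x o y) (x) 1 *)
definition compat_b :: "'a::comm_ring_1 \<Rightarrow> (nat list \<Rightarrow> nat list \<Rightarrow> (nat list \<Rightarrow>\<^sub>0 'a))
     \<Rightarrow> nat list \<times> nat list \<Rightarrow> nat list \<times> nat list \<Rightarrow> (nat list \<times> nat list \<Rightarrow>\<^sub>0 'a)" where
  "compat_b q op p r = (if snd p = [] \<and> snd r = []
       then tens (op (fst p) (fst r)) (Poly_Mapping.single [] 1)
       else tens (ext_star q (fst p) (fst r)) (op (snd p) (snd r)))"

definition bilinT :: "(nat list \<times> nat list \<Rightarrow> nat list \<times> nat list \<Rightarrow> (nat list \<times> nat list \<Rightarrow>\<^sub>0 'a::comm_ring_1))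
     \<Rightarrow> (nat list \<times> nat list \<Rightarrow>\<^sub>0 'a) \<Rightarrow> (nat list \<times> nat list \<Rightarrow>\<^sub>0 'a) \<Rightarrow> (nat list \<times> nat list \<Rightarrow>\<^sub>0 'a)" where
  "bilinT B s t = (\<Sum>p\<in>Poly_Mapping.keys s. \<Sum>r\<in>Poly_Mapping.keys t.
                     smult_pm (Poly_Mapping.lookup s p * Poly_Mapping.lookup t r) (B p r))"

definition q_tridendriform_bialgebra :: "'a::comm_ring_1 \<Rightarrow> bool" where
  "q_tridendriform_bialgebra q \<longleftrightarrow>
     q_tridendriform q PQS (Prec q) (Dot q) (Succ q) \<and>
     (\<forall>x\<in>(PQSplus :: (nat list \<Rightarrow>\<^sub>0 'a) set). Cop x \<in> (TensPlus :: (nat list \<times> nat list \<Rightarrow>\<^sub>0 'a) set)) \<and>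
     Cop (Poly_Mapping.single [] 1) = Poly_Mapping.single ([], []) (1::'a) \<and>
     (\<forall>x\<in>(PQSplus :: (nat list \<Rightarrow>\<^sub>0 'a) set). counit_id (Cop x) = x \<and> id_counit (Cop x) = x) \<and>
     (\<forall>x\<in>PQS. \<forall>y\<in>PQS.
        Cop (Succ q x y) = bilinT (compat_b q (ext_succ q)) (Cop x) (Cop y) \<and>
        Cop (Dot q x y) = bilinT (compat_b q (ext_dot q)) (Cop x) (Cop y) \<and>
        Cop (Prec q x y) = bilinT (compat_b q (ext_prec q)) (Cop x) (Cop y))"

end

theory Submission
  imports Defs
begin

definition cl :: "nat list \<Rightarrow> nat \<Rightarrow> nat" where
  "cl u a = length (filter (\<lambda>x. x < a) u)"

definition phi :: "nat list \<Rightarrow> nat \<Rightarrow> nat" where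
  "phi u v = Min ((\<lambda>a. cl u a + 1 + v - a) ` {a \<in> set u. a \<le> v})"

lemma cl_mset: "mset u = mset u' \<Longrightarrow> cl u = cl u'"
  unfolding cl_def by (metis mset_filter size_mset)

lemma phi_mset: "mset u = mset u' \<Longrightarrow> phi u = phi u'"
proof -
  assume m: "mset u = mset u'"
  then have "set u = set u'" by (rule mset_eq_setD)
  with cl_mset[OF m] show ?thesis unfolding phi_def by simp
qed

lemma phi_le: "a \<in> set u \<Longrightarrow> a \<le> v \<Longrightarrow> phi u v \<le> cl u a + 1 + v - a"
  unfolding phi_def by (rule Min_le) auto

lemma phi_attained: assumes "a \<in> set u" "a \<le> v"
  obtains b where "b \<in> set u" "b \<le> v" "phi u v = cl u b + 1 + v - b"
proof -
  have "phi u v \<in> (\<lambda>a. cl u a + 1 + v - a) ` {a \<in> set u. a \<le> v}"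
    unfolding phi_def by (rule Min_in) (use assms in auto)
  thus ?thesis using that by auto
qed

lemma pu_le: "pu s k \<le> Suc k"
  by (cases k) (auto simp: min.coboundedI2)

lemma cl_sorted_nth:
  assumes "sorted s" "Suc k < length s" "s ! k < s ! Suc k"
  shows "cl s (s ! Suc k) = Suc k"
proof -
  have "cl s (s ! Suc k) = card {i. i < length s \<and> s ! i < s ! Suc k}"
    unfolding cl_def by (simp add: length_filter_conv_card)
  also have "{i. i < length s \<and> s ! i < s ! Suc k} = {..k}"
  proof (intro set_eqI iffI)
    fix i assume "i \<in> {i. i < length s \<and> s ! i < s ! Suc k}"
    then show "i \<in> {..k}" using assms sorted_nth_mono[of s "Suc k" i]
      by (cases "i \<le> k") auto
  next
    fix i assume "i \<in> {..k}"
    then show "i \<in> {i. i < length s \<and> s ! i < s ! Suc k}"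
      using assms sorted_nth_mono[of s i k] by auto
  qed
  finally show ?thesis by simp
qed

lemma pu_phi: assumes "sorted s" "k < length s" shows "pu s k = phi s (s ! k)"
  using assms(2)
proof (induction k)
  case 0
  have A: "{a \<in> set s. a \<le> s ! 0} = {s ! 0}"
    using assms(1) 0 by (auto simp: in_set_conv_nth intro: antisym sorted_nth_mono)
  have "cl s (s ! 0) = 0" unfolding cl_def using assms(1) 0
    by (auto simp: filter_empty_conv in_set_conv_nth not_less intro: sorted_nth_mono)
  then show ?case unfolding phi_def A by simp
next
  case (Suc k)
  have le: "s ! k \<le> s ! Suc k" using assms(1) Suc.prems by (simp add: sorted_nth_mono)
  show ?case
  proof (cases "s ! k = s ! Suc k")
    case True
    then show ?thesis using Suc pu_le[of s k] by (simp add: min_def)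
  next
    case False
    let ?v = "s ! Suc k"
    let ?w = "s ! k"
    have ltv: "?w < ?v" using le False by simp
    have A: "{a \<in> set s. a \<le> ?v} = insert ?v {a \<in> set s. a \<le> ?w}"
    proof (intro set_eqI iffI)
      fix a assume "a \<in> {a \<in> set s. a \<le> ?v}"
      then obtain i where i: "i < length s" "a = s ! i" "a \<le> ?v" by (auto simp: in_set_conv_nth)
      show "a \<in> insert ?v {a \<in> set s. a \<le> ?w}"
      proof (cases "i \<le> k")
        case True then show ?thesis using i assms(1) sorted_nth_mono[of s i k] Suc.prems by auto
      next
        case False then have "?v \<le> a" using i assms(1) sorted_nth_mono[of s "Suc k" i] by auto
        then show ?thesis using i by auto
      qed
    qed (use ltv Suc.prems in auto)
    have fin: "finite {a \<in> set s. a \<le> ?w}" by simp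
    have "?w \<in> {a \<in> set s. a \<le> ?w}" using Suc.prems by simp
    then have ne: "{a \<in> set s. a \<le> ?w} \<noteq> {}" by blast
    have B: "(\<lambda>a. cl s a + 1 + ?v - a) ` {a \<in> set s. a \<le> ?w}
           = (\<lambda>x. x + (?v - ?w)) ` ((\<lambda>a. cl s a + 1 + ?w - a) ` {a \<in> set s. a \<le> ?w})"
      using ltv by (force simp: image_image)
    have C: "Min ((\<lambda>x. x + (?v - ?w)) ` ((\<lambda>a. cl s a + 1 + ?w - a) ` {a \<in> set s. a \<le> ?w}))
           = Min ((\<lambda>a. cl s a + 1 + ?w - a) ` {a \<in> set s. a \<le> ?w}) + (?v - ?w)"
      by (rule mono_Min_commute[symmetric]) (use fin ne in \<open>auto simp: mono_def\<close>)
    have D: "Min ((\<lambda>a. cl s a + 1 + ?v - a) ` {a \<in> set s. a \<le> ?w}) = phi s ?w + (?v - ?w)"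
      unfolding phi_def B C by (rule refl)
    have "phi s ?v = min (cl s ?v + 1 + ?v - ?v) (Min ((\<lambda>a. cl s a + 1 + ?v - a) ` {a \<in> set s. a \<le> ?w}))"
      unfolding phi_def A image_insert by (rule Min_insert) (use fin ne in auto)
    then have "phi s ?v = min (cl s ?v + 1) (phi s ?w + (?v - ?w))" unfolding D by simp
    also have "cl s ?v = Suc k" using cl_sorted_nth assms(1) Suc.prems ltv by blast
    finally show ?thesis using Suc ltv by (simp add: min_def)
  qed
qed

lemma park_eq: "park u = map (phi u) u"
proof -
  let ?s = "sort u"
  let ?P = "\<lambda>\<sigma>. \<sigma> permutes {..<length u} \<and> (\<forall>i<length u. u ! i = ?s ! (\<sigma> i))"
  obtain p where p: "p permutes {..<length ?s}" "permute_list p ?s = u"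
    using mset_eq_permutation[of u ?s] by auto
  have "?P p" using p by (auto simp: permute_list_nth[symmetric])
  then have P: "?P (SOME \<sigma>. ?P \<sigma>)" by (rule someI[of ?P p])
  define \<sigma> where "\<sigma> = (SOME \<sigma>. ?P \<sigma>)"
  have sl: "\<And>i. i < length u \<Longrightarrow> \<sigma> i < length u"
    using P unfolding \<sigma>_def by (meson lessThan_iff permutes_in_image)
  have ph: "phi ?s = phi u" by (rule phi_mset) simp
  have "map (\<lambda>i. park_up ?s ! (\<sigma> i)) [0..<length u] = map (phi u) u"
  proof (rule nth_equalityI)
    fix i assume "i < length (map (\<lambda>i. park_up ?s ! (\<sigma> i)) [0..<length u])"
    then have i: "i < length u" by simp
    have "park_up ?s ! (\<sigma> i) = pu ?s (\<sigma> i)" unfolding park_up_def using sl[OF i] by simp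
    also have "\<dots> = phi ?s (?s ! \<sigma> i)" by (rule pu_phi) (use sl[OF i] in auto)
    also have "?s ! \<sigma> i = u ! i" using P i unfolding \<sigma>_def by auto
    finally show "map (\<lambda>i. park_up ?s ! (\<sigma> i)) [0..<length u] ! i = map (phi u) u ! i"
      using i ph by simp
  qed simp
  then show ?thesis unfolding park_def Let_def \<sigma>_def .
qed


lemma cl_conv: "cl u a = card {i. i < length u \<and> u ! i < a}"
  unfolding cl_def by (simp add: length_filter_conv_card)

lemma cl_mono: "a \<le> b \<Longrightarrow> cl u a \<le> cl u b"
  unfolding cl_def by (induction u) auto

lemma cl_split: "a \<le> b \<Longrightarrow> cl u b = cl u a + length (filter (\<lambda>y. a \<le> y \<and> y < b) u)"
  unfolding cl_def by (induction u) auto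

lemma cl_strict: assumes "a \<in> set u" "a < b" shows "cl u a < cl u b"
proof -
  have "a \<in> set (filter (\<lambda>y. a \<le> y \<and> y < b) u)" using assms by simp
  then have "0 < length (filter (\<lambda>y. a \<le> y \<and> y < b) u)" by (rule length_pos_if_in_set)
  then show ?thesis using cl_split[of a b u] assms(2) by simp
qed

lemma filter_len_sub: "mset x \<subseteq># mset u \<Longrightarrow> length (filter P x) \<le> length (filter P u)"
proof -
  assume "mset x \<subseteq># mset u"
  then have "size (filter_mset P (mset x)) \<le> size (filter_mset P (mset u))"
    by (intro size_mset_mono multiset_filter_mono)
  then show ?thesis by (simp flip: mset_filter)
qed

lemma cl_less_len: "a \<in> set u \<Longrightarrow> cl u a < length u"
  unfolding cl_def by (rule length_filter_less) auto

lemma phi_ge1: "v \<in> set u \<Longrightarrow> 1 \<le> phi u v"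
  by (rule phi_attained[of v u v]) auto

lemma phi_le_cl: "v \<in> set u \<Longrightarrow> phi u v \<le> Suc (cl u v)"
  using phi_le[of v u v] by simp

lemma phi_strict: assumes "a \<in> set u" "b \<in> set u" "a < b" shows "phi u a < phi u b"
proof -
  obtain c where c: "c \<in> set u" "c \<le> b" "phi u b = cl u c + 1 + b - c"
    using phi_attained[OF assms(2) order_refl] by blast
  show ?thesis
  proof (cases "c \<le> a")
    case True
    then show ?thesis using phi_le[OF c(1) True] c assms by linarith
  next
    case False
    then have "cl u a < cl u c" using cl_strict assms(1) by auto
    then show ?thesis using phi_le_cl[OF assms(1)] c by linarith
  qed
qed

lemma phi_strict_iff: "a \<in> set u \<Longrightarrow> b \<in> set u \<Longrightarrow> phi u a < phi u b \<longleftrightarrow> a < b"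
  by (cases a b rule: linorder_cases) (auto dest: phi_strict)

lemma phi_le_iff: "a \<in> set u \<Longrightarrow> b \<in> set u \<Longrightarrow> phi u a \<le> phi u b \<longleftrightarrow> a \<le> b"
  using phi_strict_iff[of b u a] by linarith

lemma phi_inj: "inj_on (phi u) (set u)"
proof (rule inj_onI)
  fix a b assume "a \<in> set u" "b \<in> set u" "phi u a = phi u b"
  then show "a = b" by (cases a b rule: linorder_cases) (auto dest: phi_strict)
qed

lemma phi_gap: assumes "a \<in> set u" "a \<le> b" shows "phi u b \<le> phi u a + (b - a)"
proof -
  obtain c where c: "c \<in> set u" "c \<le> a" "phi u a = cl u c + 1 + a - c"
    using phi_attained[OF assms(1) order_refl] by blast
  show ?thesis using phi_le[of c u b] c assms by simp
qed

lemma cl_map_phi: assumes "set x \<subseteq> set u" "a \<in> set u"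
  shows "cl (map (phi u) x) (phi u a) = cl x a"
  unfolding cl_def filter_map length_map o_def
  using assms by (intro arg_cong[where f=length] filter_cong) (auto simp: phi_strict_iff)

lemma set_mset_sub: "mset x \<subseteq># mset u \<Longrightarrow> set x \<subseteq> set u"
  using set_mset_mono by fastforce

lemma phi_restrict:
  assumes sub: "mset x \<subseteq># mset u" and v: "v \<in> set x"
  shows "phi (map (phi u) x) (phi u v) = phi x v"
proof -
  have sx: "set x \<subseteq> set u" using set_mset_sub[OF sub] .
  have vu: "v \<in> set u" using v sx by auto
  show ?thesis
  proof (rule antisym)
    obtain b where b: "b \<in> set x" "b \<le> v" "phi x v = cl x b + 1 + v - b"
      using phi_attained[OF v order_refl] by blast
    have bu: "b \<in> set u" using b sx by auto
    have "phi (map (phi u) x) (phi u v) \<le> cl (map (phi u) x) (phi u b) + 1 + phi u v - phi u b"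
      by (rule phi_le) (use b bu vu phi_le_iff in auto)
    also have "\<dots> = cl x b + 1 + phi u v - phi u b" using cl_map_phi[OF sx bu] by simp
    also have "\<dots> \<le> cl x b + 1 + v - b" using phi_gap[OF bu b(2)] phi_le_iff[OF bu vu] b by linarith
    finally show "phi (map (phi u) x) (phi u v) \<le> phi x v" using b by simp
  next
    have "phi u v \<in> set (map (phi u) x)" using v by simp
    then obtain a' where a': "a' \<in> set (map (phi u) x)" "a' \<le> phi u v"
      "phi (map (phi u) x) (phi u v) = cl (map (phi u) x) a' + 1 + phi u v - a'"
      using phi_attained by blast
    then obtain a where a: "a \<in> set x" "a' = phi u a" by auto
    have au: "a \<in> set u" using a sx by auto
    have av: "a \<le> v" using a' a phi_le_iff[OF au vu] by simp
    have eq: "phi (map (phi u) x) (phi u v) = cl x a + 1 + phi u v - phi u a"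
      using a' a cl_map_phi[OF sx au] by simp
    obtain b where b: "b \<in> set u" "b \<le> v" "phi u v = cl u b + 1 + v - b"
      using phi_attained[OF vu order_refl] by blast
    show "phi x v \<le> phi (map (phi u) x) (phi u v)"
    proof (cases "b \<le> a")
      case True
      have "phi u a \<le> cl u b + 1 + a - b" by (rule phi_le) (use b True in auto)
      then have "cl x a + 1 + v - a \<le> cl x a + 1 + phi u v - phi u a" using b av True by linarith
      moreover have "phi x v \<le> cl x a + 1 + v - a" by (rule phi_le) (use a av in auto)
      ultimately show ?thesis using eq by linarith
    next
      case False
      have pa: "phi u a \<le> Suc (cl u a)" by (rule phi_le_cl[OF au])
      have s1: "cl u b = cl u a + length (filter (\<lambda>y. a \<le> y \<and> y < b) u)" using False by (simp add: cl_split)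
      have s2: "cl x b = cl x a + length (filter (\<lambda>y. a \<le> y \<and> y < b) x)" using False by (simp add: cl_split)
      have s3: "length (filter (\<lambda>y. a \<le> y \<and> y < b) x) \<le> length (filter (\<lambda>y. a \<le> y \<and> y < b) u)"
        by (rule filter_len_sub[OF sub])
      have lb: "cl x b + 1 + v - b \<le> cl x a + 1 + phi u v - phi u a"
        using pa s1 s2 s3 b by linarith
      define B where "B = {y \<in> set x. b \<le> y}"
      have Bne: "v \<in> B" using v b unfolding B_def by auto
      have finB: "finite B" unfolding B_def by simp
      define b' where "b' = Min B"
      have b'B: "b' \<in> B" unfolding b'_def using Min_in finB Bne by blast
      have b'v: "b' \<le> v" unfolding b'_def using Min_le finB Bne by blast
      have clb: "cl x b' = cl x b"
      proof -
        have "cl x b' = cl x b + length (filter (\<lambda>y. b \<le> y \<and> y < b') x)"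
          using b'B unfolding B_def by (simp add: cl_split)
        moreover have "filter (\<lambda>y. b \<le> y \<and> y < b') x = []"
          unfolding filter_empty_conv
        proof (intro ballI notI)
          fix y assume y: "y \<in> set x" "b \<le> y \<and> y < b'"
          then have "y \<in> B" unfolding B_def by simp
          then have "b' \<le> y" unfolding b'_def using finB by simp
          then show False using y by simp
        qed
        ultimately show ?thesis by simp
      qed
      have "phi x v \<le> cl x b' + 1 + v - b'" by (rule phi_le) (use b'B b'v in \<open>auto simp: B_def\<close>)
      also have "\<dots> \<le> cl x b + 1 + v - b" using clb b'B b'v unfolding B_def by auto
      finally show ?thesis using lb eq by linarith
    qed
  qed
qed

lemma park_restrict: "mset x \<subseteq># mset u \<Longrightarrow> park (map (phi u) x) = park x"
  unfolding park_eq by (auto simp: phi_restrict)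

lemma park_length[simp]: "length (park u) = length u"
  by (simp add: park_eq)

lemma park_Nil[simp]: "park [] = []"
  by (simp add: park_eq)

lemma park_Nil_iff[simp]: "park u = [] \<longleftrightarrow> u = []"
  by (simp add: park_eq)

lemma park_take: "park (take m (park u)) = park (take m u)"
proof -
  have "take m (park u) = map (phi u) (take m u)" by (simp add: park_eq take_map)
  moreover have "mset (take m u) \<subseteq># mset u" by (rule mset_subset_eq_exists_conv[THEN iffD2], rule exI[of _ "mset (drop m u)"]) (metis append_take_drop_id mset_append)
  ultimately show ?thesis by (simp add: park_restrict)
qed

lemma park_drop: "park (drop m (park u)) = park (drop m u)"
proof -
  have "drop m (park u) = map (phi u) (drop m u)" by (simp add: park_eq drop_map)
  moreover have "mset (drop m u) \<subseteq># mset u" by (rule mset_subset_eq_exists_conv[THEN iffD2], rule exI[of _ "mset (take m u)"]) (metis append_take_drop_id mset_append add.commute)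
  ultimately show ?thesis by (simp add: park_restrict)
qed

lemma phi_shift:
  assumes "\<forall>y\<in>set x. c < y" "v \<in> set x"
  shows "phi (map (\<lambda>y. y - c) x) (v - c) = phi x v"
proof -
  let ?s = "\<lambda>y. y - c"
  have inj: "inj_on ?s (set x)" using assms(1) by (auto simp: inj_on_def)
  have clx: "\<And>a. a \<in> set x \<Longrightarrow> cl (map ?s x) (a - c) = cl x a"
    unfolding cl_def filter_map length_map o_def
    using assms(1) by (intro arg_cong[where f=length] filter_cong) auto
  have S: "{a' \<in> set (map ?s x). a' \<le> v - c} = ?s ` {a \<in> set x. a \<le> v}"
    using assms by force
  have "(\<lambda>a'. cl (map ?s x) a' + 1 + (v - c) - a') ` {a' \<in> set (map ?s x). a' \<le> v - c}
      = (\<lambda>a. cl x a + 1 + v - a) ` {a \<in> set x. a \<le> v}"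
    unfolding S image_image using assms clx by (intro image_cong) force+
  then show ?thesis unfolding phi_def by simp
qed

lemma park_shift: "\<forall>y\<in>set x. c < y \<Longrightarrow> park (map (\<lambda>y. y - c) x) = park x"
  unfolding park_eq by (auto simp: phi_shift)

definition pfc :: "nat list \<Rightarrow> bool" where
  "pfc w \<longleftrightarrow> (\<forall>a\<in>set w. 1 \<le> a \<and> a \<le> Suc (cl w a))"

lemma pfc_mset: "mset w = mset w' \<Longrightarrow> pfc w = pfc w'"
proof -
  assume m: "mset w = mset w'"
  then have "set w = set w'" by (rule mset_eq_setD)
  with cl_mset[OF m] show ?thesis unfolding pfc_def by simp
qed

lemma nd_pf_pfc: assumes "sorted s" shows "nd_pf s \<longleftrightarrow> pfc s"
proof
  assume nd: "nd_pf s"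
  show "pfc s" unfolding pfc_def
  proof
    fix a assume a: "a \<in> set s"
    then obtain i where i: "i < length s" "s ! i = a" by (auto simp: in_set_conv_nth)
    have "1 \<le> a" using nd i unfolding nd_pf_def by auto
    moreover
    let ?c = "cl s a"
    have c: "?c < length s" using cl_less_len[OF a] .
    have "a \<le> s ! ?c"
    proof (rule ccontr)
      assume "\<not> a \<le> s ! ?c"
      then have "{..?c} \<subseteq> {i. i < length s \<and> s ! i < a}"
        using assms c by (auto intro: le_less_trans[OF sorted_nth_mono])
      then have "card {..?c} \<le> ?c" unfolding cl_conv by (rule card_mono[rotated]) simp
      then show False by simp
    qed
    then have "a \<le> Suc ?c" using nd c unfolding nd_pf_def by (meson order_trans)
    ultimately show "1 \<le> a \<and> a \<le> Suc (cl s a)" by simp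
  qed
next
  assume p: "pfc s"
  have "\<forall>i<length s. 1 \<le> s ! i \<and> s ! i \<le> Suc i"
  proof (intro allI impI)
    fix i assume i: "i < length s"
    let ?a = "s ! i"
    have "{j. j < length s \<and> s ! j < ?a} \<subseteq> {..<i}"
    proof
      fix j assume "j \<in> {j. j < length s \<and> s ! j < ?a}"
      then have j: "j < length s" "s ! j < s ! i" by auto
      have "j < i" proof (rule ccontr)
        assume "\<not> j < i" then have "s ! i \<le> s ! j" using assms j by (simp add: sorted_nth_mono)
        then show False using j by simp
      qed
      then show "j \<in> {..<i}" by simp
    qed
    then have "cl s ?a \<le> i" unfolding cl_conv by (metis card_lessThan card_mono finite_lessThan)
    moreover have "s ! i \<in> set s" using i by simp
    ultimately show "1 \<le> s ! i \<and> s ! i \<le> Suc i" using p unfolding pfc_def by fastforce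
  qed
  then show "nd_pf s" using assms unfolding nd_pf_def by simp
qed

lemma is_pf_pfc: "is_pf w \<longleftrightarrow> pfc w"
proof
  assume "is_pf w"
  then obtain fu \<sigma> where f: "nd_pf fu" "length fu = length w" "\<sigma> permutes {..<length w}"
     "\<forall>i<length w. w ! i = fu ! (\<sigma> i)" unfolding is_pf_def by blast
  have "w = permute_list \<sigma> fu" using f by (intro nth_equalityI) (auto simp: permute_list_nth)
  then have m: "mset w = mset fu" using f by (simp add: mset_permute_list)
  have "sorted fu" using f unfolding nd_pf_def by simp
  then show "pfc w" using f(1) nd_pf_pfc pfc_mset[OF m] by simp
next
  assume p: "pfc w"
  let ?s = "sort w"
  obtain \<sigma> where s: "\<sigma> permutes {..<length ?s}" "permute_list \<sigma> ?s = w"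
    using mset_eq_permutation[of w ?s] by auto
  have "pfc ?s" using p pfc_mset[of ?s w] by simp
  then have "nd_pf ?s" using nd_pf_pfc by simp
  then show "is_pf w" unfolding is_pf_def
    using s by (intro exI[of _ ?s] exI[of _ \<sigma>]) (auto simp: permute_list_nth[symmetric])
qed

lemma pfc_park: "pfc (park u)"
  unfolding pfc_def park_eq
proof
  fix b assume "b \<in> set (map (phi u) u)"
  then obtain a where a: "a \<in> set u" "b = phi u a" by auto
  show "1 \<le> b \<and> b \<le> Suc (cl (map (phi u) u) b)"
    using a phi_ge1 phi_le_cl cl_map_phi[of u u a] by auto
qed

lemma is_pf_park: "is_pf (park u)"
  using pfc_park is_pf_pfc by simp

lemma phi_pf: assumes "pfc w" "v \<in> set w" shows "phi w v = v"
proof (rule antisym)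
  obtain b where b: "b \<in> set w" "b \<le> v" "phi w v = cl w b + 1 + v - b"
    using phi_attained[OF assms(2) order_refl] by blast
  show "v \<le> phi w v" using assms(1) b unfolding pfc_def by force
  define m where "m = Min (set w)"
  have "m \<in> set w" using assms(2) unfolding m_def by (intro Min_in) auto
  have "\<forall>y\<in>set w. m \<le> y" unfolding m_def by simp
  then have "cl w m = 0" "m \<le> v" using assms unfolding cl_def
    by (auto simp: filter_empty_conv not_less)
  moreover have "1 \<le> m" using assms(1) \<open>m \<in> set w\<close> unfolding pfc_def by blast
  ultimately show "phi w v \<le> v" using phi_le[of m w v] \<open>m \<in> set w\<close> by simp
qed

lemma park_pf: "is_pf w \<Longrightarrow> park w = w"
  unfolding is_pf_pfc park_eq by (simp add: map_idI phi_pf)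

lemma pfc_bound: "pfc w \<Longrightarrow> a \<in> set w \<Longrightarrow> a \<le> length w"
  unfolding pfc_def using cl_less_len by fastforce


lemma lookup_smult[simp]: "Poly_Mapping.lookup (smult_pm c x) k = c * Poly_Mapping.lookup x k"
  unfolding smult_pm_def by (simp add: Poly_Mapping.map.rep_eq when_def)

lemma keys_smult: "Poly_Mapping.keys (smult_pm c x) \<subseteq> Poly_Mapping.keys x"
  by (auto simp: in_keys_iff)

lemma lookup_bilin: "Poly_Mapping.lookup (bilin B x y) w =
   (\<Sum>f\<in>Poly_Mapping.keys x. \<Sum>g\<in>Poly_Mapping.keys y.
       Poly_Mapping.lookup x f * Poly_Mapping.lookup y g * Poly_Mapping.lookup (B f g) w)"
  unfolding bilin_def by (simp add: lookup_sum)

definition gprod :: "(nat \<Rightarrow> nat \<Rightarrow> bool) \<Rightarrow> (nat list \<Rightarrow> nat list \<Rightarrow> 'a::comm_ring_1) \<Rightarrow> nat list \<Rightarrow> nat list \<Rightarrow> (nat list \<Rightarrow>\<^sub>0 'a)" where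
  "gprod R E f g = (\<Sum>(h, k)\<in>park_pairs R f g. smult_pm (E h k) (Poly_Mapping.single (h @ k) 1))"

lemma park_pairs_finite: "finite (park_pairs R f g)"
proof -
  let ?N = "length f + length g"
  have "park_pairs R f g \<subseteq> (\<lambda>w. (take (length f) w, drop (length f) w)) ` {w. set w \<subseteq> {..?N} \<and> length w = ?N}"
  proof
    fix p assume "p \<in> park_pairs R f g"
    then obtain h k where p: "p = (h, k)" "is_pf (h @ k)" "park h = f" "park k = g"
      unfolding park_pairs_def by auto
    have lh: "length h = length f" "length k = length g"
      using arg_cong[OF p(3), of length] arg_cong[OF p(4), of length] by simp_all
    have "set (h @ k) \<subseteq> {..?N}" using p(2) pfc_bound lh unfolding is_pf_pfc by fastforce
    then show "p \<in> (\<lambda>w. (take (length f) w, drop (length f) w)) ` {w. set w \<subseteq> {..?N} \<and> length w = ?N}"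
      using p lh by (intro image_eqI[of _ _ "h @ k"]) auto
  qed
  moreover have "finite {w. set w \<subseteq> {..?N} \<and> length w = ?N}"
    by (rule finite_lists_length_eq) simp
  then have "finite ((\<lambda>w. (take (length f) w, drop (length f) w)) ` {w. set w \<subseteq> {..?N} \<and> length w = ?N})"
    by (rule finite_imageI)
  ultimately show ?thesis by (rule finite_subset)
qed

lemma lookup_gprod: "Poly_Mapping.lookup (gprod R E f g) w =
   (if park (take (length f) w) = f \<and> park (drop (length f) w) = g \<and> is_pf w \<and>
       R (Max (set (take (length f) w))) (Max (set (drop (length f) w)))
    then E (take (length f) w) (drop (length f) w) else 0)"
proof -
  let ?t = "(take (length f) w, drop (length f) w)"
  have "Poly_Mapping.lookup (gprod R E f g) w =
        (\<Sum>p\<in>park_pairs R f g. E (fst p) (snd p) * (if p = ?t then 1 else 0))"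
    unfolding gprod_def lookup_sum
  proof (rule sum.cong[OF refl])
    fix p assume "p \<in> park_pairs R f g"
    then obtain h k where p: "p = (h, k)" "park h = f" unfolding park_pairs_def by auto
    have "length h = length f" using arg_cong[OF p(2), of length] by simp
    then have "(h @ k = w) = (p = ?t)" using p by (auto simp: append_eq_conv_conj)
    then show "Poly_Mapping.lookup (case p of (h, k) \<Rightarrow> smult_pm (E h k) (Poly_Mapping.single (h @ k) 1)) w
       = E (fst p) (snd p) * (if p = ?t then 1 else 0)"
      using p by (auto simp: lookup_single when_def)
  qed
  also have "\<dots> = (if ?t \<in> park_pairs R f g then E (fst ?t) (snd ?t) else 0)"
    by (simp add: park_pairs_finite sum.delta' if_distrib[where f="\<lambda>x. _ * x"] cong: if_cong)
  finally show ?thesis unfolding park_pairs_def by simp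
qed

definition rep :: "(nat list \<Rightarrow>\<^sub>0 'a::comm_ring_1) \<Rightarrow> (nat list \<Rightarrow>\<^sub>0 'a) \<Rightarrow> (nat list \<Rightarrow>\<^sub>0 'a)
    \<Rightarrow> (nat list \<Rightarrow> nat \<Rightarrow> 'a) \<Rightarrow> bool" where
  "rep Y x y C \<longleftrightarrow> (\<forall>v. Poly_Mapping.lookup Y v =
      (\<Sum>k\<le>length v. Poly_Mapping.lookup x (park (take k v)) * Poly_Mapping.lookup y (park (drop k v)) * C v k))"

lemma rep_bilin:
  assumes B: "\<And>f g w. Poly_Mapping.lookup (B f g) w =
     (if park (take (length f) w) = f \<and> park (drop (length f) w) = g then C w (length f) else 0)"
  shows "rep (bilin B x y) x y C"
  unfolding rep_def
proof
  fix w :: "nat list"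
  let ?lx = "Poly_Mapping.lookup x" and ?ly = "Poly_Mapping.lookup y"
  let ?L = "length w"
  have "Poly_Mapping.lookup (bilin B x y) w =
     (\<Sum>f\<in>Poly_Mapping.keys x. \<Sum>g\<in>Poly_Mapping.keys y.
        ?lx f * ?ly g * (if park (take (length f) w) = f \<and> park (drop (length f) w) = g then C w (length f) else 0))"
    unfolding lookup_bilin B ..
  also have "\<dots> = (\<Sum>f\<in>Poly_Mapping.keys x.
        (if park (take (length f) w) = f then ?lx f * ?ly (park (drop (length f) w)) * C w (length f) else 0))"
  proof (rule sum.cong[OF refl])
    fix f
    have "(\<Sum>g\<in>Poly_Mapping.keys y. ?lx f * ?ly g * (if park (take (length f) w) = f \<and> park (drop (length f) w) = g then C w (length f) else 0))
      = (\<Sum>g\<in>Poly_Mapping.keys y. if g = park (drop (length f) w) then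
            (if park (take (length f) w) = f then ?lx f * ?ly g * C w (length f) else 0) else 0)"
      by (rule sum.cong) auto
    also have "\<dots> = (if park (drop (length f) w) \<in> Poly_Mapping.keys y then
            (if park (take (length f) w) = f then ?lx f * ?ly (park (drop (length f) w)) * C w (length f) else 0) else 0)"
      by (simp add: sum.delta')
    also have "\<dots> = (if park (take (length f) w) = f then ?lx f * ?ly (park (drop (length f) w)) * C w (length f) else 0)"
      by (auto simp: in_keys_iff)
    finally show "(\<Sum>g\<in>Poly_Mapping.keys y. ?lx f * ?ly g * (if park (take (length f) w) = f \<and> park (drop (length f) w) = g then C w (length f) else 0))
      = (if park (take (length f) w) = f then ?lx f * ?ly (park (drop (length f) w)) * C w (length f) else 0)" .
  qed
  also have "\<dots> = (\<Sum>f\<in>Poly_Mapping.keys x. \<Sum>n\<le>?L.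
        (if f = park (take n w) then ?lx f * ?ly (park (drop n w)) * C w n else 0))"
  proof (rule sum.cong[OF refl])
    fix f
    show "(if park (take (length f) w) = f then ?lx f * ?ly (park (drop (length f) w)) * C w (length f) else 0)
      = (\<Sum>n\<le>?L. (if f = park (take n w) then ?lx f * ?ly (park (drop n w)) * C w n else 0))"
    proof (cases "length f \<le> ?L")
      case True
      have "(\<Sum>n\<le>?L. (if f = park (take n w) then ?lx f * ?ly (park (drop n w)) * C w n else 0))
          = (\<Sum>n\<le>?L. (if n = length f then (if f = park (take n w) then ?lx f * ?ly (park (drop n w)) * C w n else 0) else 0))"
        by (rule sum.cong) (auto simp: min_def)
      also have "\<dots> = (if park (take (length f) w) = f then ?lx f * ?ly (park (drop (length f) w)) * C w (length f) else 0)"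
        using True by (simp add: sum.delta' eq_commute)
      finally show ?thesis by simp
    next
      case False
      then have "\<And>n. n \<le> ?L \<Longrightarrow> f \<noteq> park (take n w)" by (auto dest!: arg_cong[where f=length])
      moreover have "park (take (length f) w) \<noteq> f" using False by (auto dest!: arg_cong[where f=length])
      ultimately show ?thesis by simp
    qed
  qed
  also have "\<dots> = (\<Sum>n\<le>?L. \<Sum>f\<in>Poly_Mapping.keys x.
        (if f = park (take n w) then ?lx f * ?ly (park (drop n w)) * C w n else 0))"
    by (rule sum.swap)
  also have "\<dots> = (\<Sum>n\<le>?L. ?lx (park (take n w)) * ?ly (park (drop n w)) * C w n)"
    by (rule sum.cong[OF refl]) (auto simp: sum.delta' in_keys_iff)
  finally show "Poly_Mapping.lookup (bilin B x y) w = (\<Sum>n\<le>?L. ?lx (park (take n w)) * ?ly (park (drop n w)) * C w n)" .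
qed

definition Kp :: "'a::comm_ring_1 \<Rightarrow> nat list \<Rightarrow> nat list \<Rightarrow> 'a" where
  "Kp q x y = (if Max (set y) < Max (set x) then q ^ cap x y else 0)"
definition Ks :: "'a::comm_ring_1 \<Rightarrow> nat list \<Rightarrow> nat list \<Rightarrow> 'a" where
  "Ks q x y = (if Max (set x) < Max (set y) then q ^ cap x y else 0)"
definition Kd :: "'a::comm_ring_1 \<Rightarrow> nat list \<Rightarrow> nat list \<Rightarrow> 'a" where
  "Kd q x y = (if Max (set x) = Max (set y) then q ^ (cap x y - 1) else 0)"

definition CW :: "(nat list \<Rightarrow> nat list \<Rightarrow> 'a::comm_ring_1) \<Rightarrow> nat list \<Rightarrow> nat \<Rightarrow> 'a" where
  "CW K w n = (if is_pf w then K (take n w) (drop n w) else 0)"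

lemma rep_Prec: "rep (Prec q x y) x y (CW (Kp q))"
proof -
  have "prec_b q = gprod (\<lambda>a b. a > b) (\<lambda>h k. q ^ cap h k)"
    unfolding prec_b_def gprod_def by (intro ext) simp
  then show ?thesis unfolding Prec_def
    by (intro rep_bilin) (simp add: lookup_gprod CW_def Kp_def)
qed

lemma rep_Succ: "rep (Succ q x y) x y (CW (Ks q))"
proof -
  have "succ_b q = gprod (\<lambda>a b. a < b) (\<lambda>h k. q ^ cap h k)"
    unfolding succ_b_def gprod_def by (intro ext) simp
  then show ?thesis unfolding Succ_def
    by (intro rep_bilin) (simp add: lookup_gprod CW_def Ks_def)
qed

lemma rep_Dot: "rep (Dot q x y) x y (CW (Kd q))"
proof -
  have "dot_b q = gprod (\<lambda>a b. a = b) (\<lambda>h k. q ^ (cap h k - 1))"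
    unfolding dot_b_def gprod_def by (intro ext) simp
  then show ?thesis unfolding Dot_def
    by (intro rep_bilin) (simp add: lookup_gprod CW_def Kd_def)
qed

lemma rep_add: "rep Y1 x y C1 \<Longrightarrow> rep Y2 x y C2 \<Longrightarrow> rep (Y1 + Y2) x y (\<lambda>v k. C1 v k + C2 v k)"
  unfolding rep_def by (simp add: lookup_add sum.distrib distrib_left)

lemma rep_smult: "rep Y x y C \<Longrightarrow> rep (smult_pm c Y) x y (\<lambda>v k. c * C v k)"
  unfolding rep_def by (simp add: sum_distrib_left mult_ac)


lemma qm: "1 \<le> X \<Longrightarrow> (q::'a::comm_ring_1) * q ^ (X - 1) = q ^ X"
  by (metis One_nat_def Suc_pred less_eq_Suc_le power_Suc)

lemma qm2: "1 \<le> X \<Longrightarrow> (q::'a::comm_ring_1) ^ (X - 1) * q = q ^ X"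
  using qm[of X q] by (simp add: mult.commute)

lemma qm': "Suc 0 \<le> X \<Longrightarrow> (q::'a::comm_ring_1) * q ^ (X - Suc 0) = q ^ X"
  using qm[of X q] by simp

lemma pw: "(i::nat) = j \<Longrightarrow> (q::'a::comm_ring_1) ^ i = q ^ j" by simp

locale wts =
  fixes a b c A B C D :: nat
  assumes H: "A + B = C + D"
    and PAB: "a = b \<Longrightarrow> 1 \<le> A"
    and PB: "max a b = c \<Longrightarrow> 1 \<le> B"
    and PC: "a = max b c \<Longrightarrow> 1 \<le> C"
    and PD: "b = c \<Longrightarrow> 1 \<le> D"
begin

lemma w1: "(if b < a then (q::'a::comm_ring_1) ^ A else 0) * (if c < max a b then q ^ B else 0) =
   (if max b c < a then q ^ C else 0) * ((if c < b then q ^ D else 0) + (if b < c then q ^ D else 0) + q * (if b = c then q ^ (D - 1) else 0))"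
proof -
  have "q ^ A * q ^ B = q ^ C * q ^ D" using H by (simp add: power_add[symmetric])
  then show ?thesis using PD
    by (cases b c rule: linorder_cases) (auto simp: qm')
qed

lemma w2: "(if a < b then (q::'a::comm_ring_1) ^ A else 0) * (if c < max a b then q ^ B else 0) =
   (if a < max b c then q ^ C else 0) * (if c < b then q ^ D else 0)"
proof -
  have "q ^ A * q ^ B = q ^ C * q ^ D" using H by (simp add: power_add[symmetric])
  then show ?thesis by (cases b c rule: linorder_cases) auto
qed

lemma w3: "((if b < a then (q::'a::comm_ring_1) ^ A else 0) + (if a < b then q ^ A else 0) + q * (if a = b then q ^ (A - 1) else 0)) * (if max a b < c then q ^ B else 0) =
   (if a < max b c then q ^ C else 0) * (if b < c then q ^ D else 0)"
proof -
  have "q ^ A * q ^ B = q ^ C * q ^ D" using H by (simp add: power_add[symmetric])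
  then show ?thesis using PAB
    by (cases a b rule: linorder_cases) (auto simp: qm')
qed

lemma w4: "(if a = b then (q::'a::comm_ring_1) ^ (A - 1) else 0) * (if max a b = c then q ^ (B - 1) else 0) =
   (if a = max b c then q ^ (C - 1) else 0) * (if b = c then q ^ (D - 1) else 0)"
proof (cases "a = b \<and> b = c")
  case True
  then have "A - 1 + (B - 1) = C - 1 + (D - 1)" using H PAB PB PC PD by auto
  then have "q ^ (A - 1) * q ^ (B - 1) = q ^ (C - 1) * q ^ (D - 1)" by (simp add: power_add[symmetric])
  then show ?thesis using True by simp
qed auto

lemma w5: "(if a < b then (q::'a::comm_ring_1) ^ A else 0) * (if max a b = c then q ^ (B - 1) else 0) =
   (if a < max b c then q ^ C else 0) * (if b = c then q ^ (D - 1) else 0)"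
proof (cases "a < b \<and> b = c")
  case True
  then have "A + (B - 1) = C + (D - 1)" using H PB PD by auto
  then have "q ^ A * q ^ (B - 1) = q ^ C * q ^ (D - 1)" by (simp add: power_add[symmetric])
  then show ?thesis using True by simp
qed auto

lemma w6: "(if b < a then (q::'a::comm_ring_1) ^ A else 0) * (if max a b = c then q ^ (B - 1) else 0) =
   (if a = max b c then q ^ (C - 1) else 0) * (if b < c then q ^ D else 0)"
proof (cases "b < a \<and> a = c")
  case True
  then have "A + (B - 1) = (C - 1) + D" using H PB PC by auto
  then have "q ^ A * q ^ (B - 1) = q ^ (C - 1) * q ^ D" by (simp add: power_add[symmetric])
  then show ?thesis using True by simp
qed auto

lemma w7: "(if a = b then (q::'a::comm_ring_1) ^ (A - 1) else 0) * (if c < max a b then q ^ B else 0) =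
   (if a = max b c then q ^ (C - 1) else 0) * (if c < b then q ^ D else 0)"
proof (cases "a = b \<and> c < b")
  case True
  then have "(A - 1) + B = (C - 1) + D" using H PAB PC by auto
  then have "q ^ (A - 1) * q ^ B = q ^ (C - 1) * q ^ D" by (simp add: power_add[symmetric])
  then show ?thesis using True by simp
qed auto

end

lemma tri: "(\<Sum>n\<le>(L::nat). \<Sum>m\<le>n. G m n) = (\<Sum>m\<le>L. \<Sum>k\<le>L - m. (G m (m + k) :: 'a::comm_monoid_add))"
proof (induction L)
  case 0 then show ?case by simp
next
  case (Suc L)
  have "(\<Sum>m\<le>Suc L. \<Sum>k\<le>Suc L - m. G m (m + k)) =
        (\<Sum>m\<le>L. \<Sum>k\<le>Suc L - m. G m (m + k)) + G (Suc L) (Suc L)" by simp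
  also have "(\<Sum>m\<le>L. \<Sum>k\<le>Suc L - m. G m (m + k)) = (\<Sum>m\<le>L. (\<Sum>k\<le>L - m. G m (m + k)) + G m (Suc L))"
  proof (rule sum.cong[OF refl])
    fix m assume "m \<in> {..L}"
    then have "Suc L - m = Suc (L - m)" by auto
    then show "(\<Sum>k\<le>Suc L - m. G m (m + k)) = (\<Sum>k\<le>L - m. G m (m + k)) + G m (Suc L)"
      using \<open>m \<in> {..L}\<close> by simp
  qed
  finally show ?case using Suc by (simp add: sum.distrib add.assoc)
qed

lemma TL:
  assumes r1: "rep Y a b C1" and r2: "rep Z Y c C2"
  shows "Poly_Mapping.lookup Z w = (\<Sum>n\<le>length w. \<Sum>m\<le>n.
      Poly_Mapping.lookup a (park (take m w)) * Poly_Mapping.lookup b (park (drop m (take n w))) *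
      Poly_Mapping.lookup c (park (drop n w)) * (C1 (park (take n w)) m * C2 w n))"
proof -
  have "Poly_Mapping.lookup Z w = (\<Sum>n\<le>length w. Poly_Mapping.lookup Y (park (take n w)) *
      Poly_Mapping.lookup c (park (drop n w)) * C2 w n)"
    using r2 unfolding rep_def by simp
  also have "\<dots> = (\<Sum>n\<le>length w. \<Sum>m\<le>n.
      Poly_Mapping.lookup a (park (take m w)) * Poly_Mapping.lookup b (park (drop m (take n w))) *
      Poly_Mapping.lookup c (park (drop n w)) * (C1 (park (take n w)) m * C2 w n))"
  proof (rule sum.cong[OF refl])
    fix n assume n: "n \<in> {..length w}"
    have "Poly_Mapping.lookup Y (park (take n w)) = (\<Sum>m\<le>n.
      Poly_Mapping.lookup a (park (take m w)) * Poly_Mapping.lookup b (park (drop m (take n w))) * C1 (park (take n w)) m)"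
      using r1 n unfolding rep_def by (auto simp: park_take park_drop min_def intro!: sum.cong)
    then show "Poly_Mapping.lookup Y (park (take n w)) * Poly_Mapping.lookup c (park (drop n w)) * C2 w n =
      (\<Sum>m\<le>n. Poly_Mapping.lookup a (park (take m w)) * Poly_Mapping.lookup b (park (drop m (take n w))) *
      Poly_Mapping.lookup c (park (drop n w)) * (C1 (park (take n w)) m * C2 w n))"
      by (simp only: sum_distrib_right) (intro sum.cong refl, simp add: mult_ac)
  qed
  finally show ?thesis .
qed

lemma TR:
  assumes r1: "rep Y b c C1" and r2: "rep Z a Y C2"
  shows "Poly_Mapping.lookup Z w = (\<Sum>m\<le>length w. \<Sum>k\<le>length w - m.
      Poly_Mapping.lookup a (park (take m w)) * Poly_Mapping.lookup b (park (take k (drop m w))) *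
      Poly_Mapping.lookup c (park (drop k (drop m w))) * (C1 (park (drop m w)) k * C2 w m))"
proof -
  have "Poly_Mapping.lookup Z w = (\<Sum>m\<le>length w. Poly_Mapping.lookup a (park (take m w)) *
      Poly_Mapping.lookup Y (park (drop m w)) * C2 w m)"
    using r2 unfolding rep_def by simp
  also have "\<dots> = (\<Sum>m\<le>length w. \<Sum>k\<le>length w - m.
      Poly_Mapping.lookup a (park (take m w)) * Poly_Mapping.lookup b (park (take k (drop m w))) *
      Poly_Mapping.lookup c (park (drop k (drop m w))) * (C1 (park (drop m w)) k * C2 w m))"
  proof (rule sum.cong[OF refl])
    fix m assume m: "m \<in> {..length w}"
    have "Poly_Mapping.lookup Y (park (drop m w)) = (\<Sum>k\<le>length w - m.
      Poly_Mapping.lookup b (park (take k (drop m w))) * Poly_Mapping.lookup c (park (drop k (drop m w))) * C1 (park (drop m w)) k)"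
      using r1 unfolding rep_def by (simp add: park_take park_drop)
    then show "Poly_Mapping.lookup a (park (take m w)) * Poly_Mapping.lookup Y (park (drop m w)) * C2 w m =
      (\<Sum>k\<le>length w - m. Poly_Mapping.lookup a (park (take m w)) * Poly_Mapping.lookup b (park (take k (drop m w))) *
      Poly_Mapping.lookup c (park (drop k (drop m w))) * (C1 (park (drop m w)) k * C2 w m))"
      by (simp only: sum_distrib_right sum_distrib_left) (intro sum.cong refl, simp add: mult_ac)
  qed
  finally show ?thesis .
qed

lemma MAIN:
  assumes a0: "Poly_Mapping.lookup a [] = 0" and b0: "Poly_Mapping.lookup b [] = 0"
    and c0: "Poly_Mapping.lookup c [] = 0"
    and r1: "rep Y a b C1" and r2: "rep Z Y c C2" and r3: "rep Y' b c C1'" and r4: "rep Z' a Y' C2'"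
    and W: "\<And>m n. 0 < m \<Longrightarrow> m < n \<Longrightarrow> n < length w \<Longrightarrow>
       C1 (park (take n w)) m * C2 w n = C1' (park (drop m w)) (n - m) * C2' w m"
  shows "Poly_Mapping.lookup Z w = Poly_Mapping.lookup Z' w"
proof -
  let ?a = "Poly_Mapping.lookup a" and ?b = "Poly_Mapping.lookup b" and ?c = "Poly_Mapping.lookup c"
  have "Poly_Mapping.lookup Z w = (\<Sum>m\<le>length w. \<Sum>k\<le>length w - m.
      ?a (park (take m w)) * ?b (park (drop m (take (m + k) w))) *
      ?c (park (drop (m + k) w)) * (C1 (park (take (m + k) w)) m * C2 w (m + k)))"
    unfolding TL[OF r1 r2] by (rule tri)
  also have "\<dots> = (\<Sum>m\<le>length w. \<Sum>k\<le>length w - m.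
      ?a (park (take m w)) * ?b (park (take k (drop m w))) *
      ?c (park (drop k (drop m w))) * (C1' (park (drop m w)) k * C2' w m))"
  proof (intro sum.cong[OF refl])
    fix m k assume m: "m \<in> {..length w}" and k: "k \<in> {..length w - m}"
    have e1: "drop m (take (m + k) w) = take k (drop m w)" by (simp add: drop_take)
    have e2: "drop k (drop m w) = drop (m + k) w" by (simp add: add.commute)
    show "?a (park (take m w)) * ?b (park (drop m (take (m + k) w))) *
      ?c (park (drop (m + k) w)) * (C1 (park (take (m + k) w)) m * C2 w (m + k)) =
      ?a (park (take m w)) * ?b (park (take k (drop m w))) *
      ?c (park (drop k (drop m w))) * (C1' (park (drop m w)) k * C2' w m)"
    proof (cases "m = 0 \<or> k = 0 \<or> m + k = length w")
      case True
      then show ?thesis using a0 b0 c0 m k unfolding e1 e2 by auto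
    next
      case False
      then have "0 < m" "m < m + k" "m + k < length w" using m k by auto
      from W[OF this] show ?thesis unfolding e1 e2 by simp
    qed
  qed
  also have "\<dots> = Poly_Mapping.lookup Z' w" unfolding TR[OF r3 r4] ..
  finally show ?thesis .
qed


lemma Max_map_phi:
  assumes "x \<noteq> []" "set x \<subseteq> set u"
  shows "Max (set (map (phi u) x)) = phi u (Max (set x))"
proof (rule Max_eqI)
  have mx: "Max (set x) \<in> set x" using assms by simp
  show "phi u (Max (set x)) \<in> set (map (phi u) x)" using mx by simp
  fix y assume "y \<in> set (map (phi u) x)"
  then obtain z where z: "z \<in> set x" "y = phi u z" by auto
  have "z \<le> Max (set x)" using z by simp
  moreover have "z \<in> set u" "Max (set x) \<in> set u" using z mx assms by auto
  ultimately show "y \<le> phi u (Max (set x))" using z phi_le_iff[of z u "Max (set x)"] by simp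
qed simp

lemma cap_map_phi:
  assumes "set x \<subseteq> set u" "set y \<subseteq> set u"
  shows "cap (map (phi u) x) (map (phi u) y) = cap x y"
proof -
  have inj: "inj_on (phi u) (set x \<union> set y)" using phi_inj assms by (metis inj_on_subset le_sup_iff)
  have "set (map (phi u) x) \<inter> set (map (phi u) y) = phi u ` (set x \<inter> set y)"
    using inj by (auto simp: inj_on_def)
  moreover have "inj_on (phi u) (set x \<inter> set y)" using inj by (rule inj_on_subset) auto
  ultimately show ?thesis unfolding cap_def by (simp add: card_image)
qed

definition Kinv :: "(nat list \<Rightarrow> nat list \<Rightarrow> 'a) \<Rightarrow> bool" where
  "Kinv K \<longleftrightarrow> (\<forall>u x y. x \<noteq> [] \<longrightarrow> y \<noteq> [] \<longrightarrow> set x \<subseteq> set u \<longrightarrow> set y \<subseteq> set u \<longrightarrow>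
      K (map (phi u) x) (map (phi u) y) = K x y)"

lemma Kinv_Kp: "Kinv (Kp q)"
  unfolding Kinv_def Kp_def
proof (intro allI impI)
  fix u x y :: "nat list"
  assume a: "x \<noteq> []" "y \<noteq> []" "set x \<subseteq> set u" "set y \<subseteq> set u"
  have m: "Max (set x) \<in> set u" "Max (set y) \<in> set u" using a by auto
  show "(if Max (set (map (phi u) y)) < Max (set (map (phi u) x)) then q ^ cap (map (phi u) x) (map (phi u) y) else 0) =
        (if Max (set y) < Max (set x) then q ^ cap x y else 0)"
    unfolding Max_map_phi[OF a(1) a(3)] Max_map_phi[OF a(2) a(4)] cap_map_phi[OF a(3) a(4)]
    using m by (simp add: phi_strict_iff)
qed

lemma Kinv_Ks: "Kinv (Ks q)"
  unfolding Kinv_def Ks_def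
proof (intro allI impI)
  fix u x y :: "nat list"
  assume a: "x \<noteq> []" "y \<noteq> []" "set x \<subseteq> set u" "set y \<subseteq> set u"
  have m: "Max (set x) \<in> set u" "Max (set y) \<in> set u" using a by auto
  show "(if Max (set (map (phi u) x)) < Max (set (map (phi u) y)) then q ^ cap (map (phi u) x) (map (phi u) y) else 0) =
        (if Max (set x) < Max (set y) then q ^ cap x y else 0)"
    unfolding Max_map_phi[OF a(1) a(3)] Max_map_phi[OF a(2) a(4)] cap_map_phi[OF a(3) a(4)]
    using m by (simp add: phi_strict_iff)
qed

lemma Kinv_Kd: "Kinv (Kd q)"
  unfolding Kinv_def Kd_def
proof (intro allI impI)
  fix u x y :: "nat list"
  assume a: "x \<noteq> []" "y \<noteq> []" "set x \<subseteq> set u" "set y \<subseteq> set u"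
  have m: "Max (set x) \<in> set u" "Max (set y) \<in> set u" using a by auto
  have e: "phi u (Max (set x)) = phi u (Max (set y)) \<longleftrightarrow> Max (set x) = Max (set y)"
    using phi_inj[of u] m by (auto simp: inj_on_def)
  show "(if Max (set (map (phi u) x)) = Max (set (map (phi u) y)) then q ^ (cap (map (phi u) x) (map (phi u) y) - 1) else 0) =
        (if Max (set x) = Max (set y) then q ^ (cap x y - 1) else 0)"
    unfolding Max_map_phi[OF a(1) a(3)] Max_map_phi[OF a(2) a(4)] cap_map_phi[OF a(3) a(4)]
    using e by simp
qed

lemma Kinv_sum: "Kinv K1 \<Longrightarrow> Kinv K2 \<Longrightarrow> Kinv K3 \<Longrightarrow> Kinv (\<lambda>x y. K1 x y + K2 x y + c * K3 x y)"
  unfolding Kinv_def by simp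

lemma CW_park:
  assumes "Kinv K" "0 < m" "m < length u"
  shows "CW K (park u) m = K (take m u) (drop m u)"
proof -
  have "take m (park u) = map (phi u) (take m u)" "drop m (park u) = map (phi u) (drop m u)"
    by (simp_all add: park_eq take_map drop_map)
  moreover have "take m u \<noteq> []" "drop m u \<noteq> []" using assms by auto
  moreover have "set (take m u) \<subseteq> set u" "set (drop m u) \<subseteq> set u"
    by (simp_all add: set_take_subset set_drop_subset)
  ultimately show ?thesis using assms(1) is_pf_park unfolding CW_def Kinv_def by simp
qed

lemma wts_lists:
  assumes "x \<noteq> []" "y \<noteq> []" "z \<noteq> []"
  shows "wts (Max (set x)) (Max (set y)) (Max (set z)) (cap x y) (cap (x @ y) z) (cap x (y @ z)) (cap y z)"
proof -
  let ?X = "set x" and ?Y = "set y" and ?Z = "set z"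
  have f: "finite ?X" "finite ?Y" "finite ?Z" by auto
  have mx: "Max ?X \<in> ?X" "Max ?Y \<in> ?Y" "Max ?Z \<in> ?Z" using assms by auto
  have c1: "cap (x @ y) z = card ((?X \<inter> ?Z) \<union> (?Y \<inter> ?Z))" unfolding cap_def by (simp add: Int_Un_distrib2)
  have c2: "cap x (y @ z) = card ((?X \<inter> ?Y) \<union> (?X \<inter> ?Z))" unfolding cap_def by (simp add: Int_Un_distrib)
  have u1: "card (?X \<inter> ?Z) + card (?Y \<inter> ?Z) = card ((?X \<inter> ?Z) \<union> (?Y \<inter> ?Z)) + card (?X \<inter> ?Y \<inter> ?Z)"
    using card_Un_Int[of "?X \<inter> ?Z" "?Y \<inter> ?Z"] by (simp add: Int_ac)
  have u2: "card (?X \<inter> ?Y) + card (?X \<inter> ?Z) = card ((?X \<inter> ?Y) \<union> (?X \<inter> ?Z)) + card (?X \<inter> ?Y \<inter> ?Z)"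
    using card_Un_Int[of "?X \<inter> ?Y" "?X \<inter> ?Z"] by (simp add: Int_ac)
  have pos: "\<And>v A B. v \<in> A \<Longrightarrow> v \<in> B \<Longrightarrow> finite A \<Longrightarrow> 1 \<le> card (A \<inter> B)"
    by (metis One_nat_def Suc_leI card_gt_0_iff disjoint_iff finite_Int)
  show ?thesis
  proof
    show "cap x y + cap (x @ y) z = cap x (y @ z) + cap y z"
      unfolding c1 c2 using u1 u2 unfolding cap_def by linarith
    show "1 \<le> cap x y" if "Max ?X = Max ?Y" unfolding cap_def using pos[of "Max ?X" ?X ?Y] that mx by simp
    show "1 \<le> cap (x @ y) z" if "max (Max ?X) (Max ?Y) = Max ?Z"
      unfolding cap_def using pos[of "Max ?Z" "?X \<union> ?Y" ?Z] that mx by (simp add: max_def split: if_splits)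
    show "1 \<le> cap x (y @ z)" if "Max ?X = max (Max ?Y) (Max ?Z)"
      unfolding cap_def using pos[of "Max ?X" ?X "?Y \<union> ?Z"] that mx by (simp add: max_def split: if_splits)
    show "1 \<le> cap y z" if "Max ?Y = Max ?Z" unfolding cap_def using pos[of "Max ?Y" ?Y ?Z] that mx by simp
  qed
qed

lemma Max_app: "x \<noteq> [] \<Longrightarrow> y \<noteq> [] \<Longrightarrow> Max (set (x @ y)) = max (Max (set x)) (Max (set y))"
  by (simp add: Max_Un)

lemma AX:
  assumes a0: "Poly_Mapping.lookup a [] = 0" and b0: "Poly_Mapping.lookup b [] = 0"
    and c0: "Poly_Mapping.lookup c [] = 0"
    and r1: "rep Y a b (CW K1)" and r2: "rep Z Y c (CW K2)" and r3: "rep Y' b c (CW K3)" and r4: "rep Z' a Y' (CW K4)"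
    and k1: "Kinv K1" and k3: "Kinv K3"
    and id: "\<And>x y z. x \<noteq> [] \<Longrightarrow> y \<noteq> [] \<Longrightarrow> z \<noteq> [] \<Longrightarrow> K1 x y * K2 (x @ y) z = K3 y z * K4 x (y @ z)"
  shows "Z = Z'"
proof (rule poly_mapping_eqI)
  fix w
  show "Poly_Mapping.lookup Z w = Poly_Mapping.lookup Z' w"
  proof (rule MAIN[OF a0 b0 c0 r1 r2 r3 r4])
    fix m n assume mn: "0 < m" "m < n" "n < length w"
    show "CW K1 (park (take n w)) m * CW K2 w n = CW K3 (park (drop m w)) (n - m) * CW K4 w m"
    proof (cases "is_pf w")
      case False then show ?thesis by (simp add: CW_def)
    next
      case True
      let ?x = "take m w" and ?y = "drop m (take n w)" and ?z = "drop n w"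
      have ne: "?x \<noteq> []" "?y \<noteq> []" "?z \<noteq> []" using mn by auto
      have e1: "take m (take n w) = ?x" "take n w = ?x @ ?y" using mn
        by (simp_all add: min_def) (metis append_take_drop_id take_take min.absorb1 less_imp_le)
      have e2: "take (n - m) (drop m w) = ?y" "drop (n - m) (drop m w) = ?z" "drop m w = ?y @ ?z"
        using mn by (simp_all add: drop_take) (metis append_take_drop_id drop_drop drop_take le_add_diff_inverse2 less_imp_le)
      have "CW K1 (park (take n w)) m = K1 ?x ?y"
        using CW_park[OF k1 mn(1), of "take n w"] mn e1 by simp
      moreover have "CW K3 (park (drop m w)) (n - m) = K3 ?y ?z"
        using CW_park[OF k3, of "n - m" "drop m w"] mn e2 by simp
      moreover have "CW K2 w n = K2 (?x @ ?y) ?z" using True e1 by (simp add: CW_def)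
      moreover have "CW K4 w m = K4 ?x (?y @ ?z)" using True e2 by (simp add: CW_def)
      ultimately show ?thesis using id[OF ne] by simp
    qed
  qed
qed


lemma CW_sum3: "(\<lambda>v k. CW K1 v k + CW K2 v k + c * CW K3 v k) = CW (\<lambda>x y. K1 x y + K2 x y + c * K3 x y)"
  by (auto simp: CW_def fun_eq_iff)

lemma rep_sum3: "rep Y1 b c (CW K1) \<Longrightarrow> rep Y2 b c (CW K2) \<Longrightarrow> rep Y3 b c (CW K3) \<Longrightarrow>
    rep (Y1 + Y2 + smult_pm q Y3) b c (CW (\<lambda>x y. K1 x y + K2 x y + q * K3 x y))"
proof -
  assume r: "rep Y1 b c (CW K1)" "rep Y2 b c (CW K2)" "rep Y3 b c (CW K3)"
  have "rep (Y1 + Y2 + smult_pm q Y3) b c (\<lambda>v k. CW K1 v k + CW K2 v k + q * CW K3 v k)"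
    by (intro rep_add rep_smult r)
  then show ?thesis unfolding CW_sum3 .
qed

abbreviation "KK q \<equiv> (\<lambda>x y. Kp q x y + Ks q x y + q * Kd q x y)"

lemma rep_KK: "rep (Prec q b c + Succ q b c + smult_pm q (Dot q b c)) b c (CW (KK q))"
  by (rule rep_sum3[OF rep_Prec rep_Succ rep_Dot])

lemma Kinv_KK: "Kinv (KK q)"
  by (rule Kinv_sum[OF Kinv_Kp Kinv_Ks Kinv_Kd])

lemma PQS_nil: "a \<in> PQS \<Longrightarrow> Poly_Mapping.lookup a [] = 0"
  unfolding PQS_def by (auto simp: in_keys_iff)

lemma rep_PQS: assumes "rep Y a b (CW K)" "a \<in> PQS" shows "Y \<in> PQS"
  unfolding PQS_def
proof (intro CollectI subsetI)
  fix w assume "w \<in> Poly_Mapping.keys Y"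
  then have "(\<Sum>k\<le>length w. Poly_Mapping.lookup a (park (take k w)) * Poly_Mapping.lookup b (park (drop k w)) * CW K w k) \<noteq> 0"
    using assms(1) unfolding rep_def by (simp add: in_keys_iff)
  then obtain k where k: "Poly_Mapping.lookup a (park (take k w)) * Poly_Mapping.lookup b (park (drop k w)) * CW K w k \<noteq> 0"
    by (meson sum.not_neutral_contains_not_neutral)
  then have "CW K w k \<noteq> 0" "Poly_Mapping.lookup a (park (take k w)) \<noteq> 0" by auto
  then have "is_pf w" by (simp add: CW_def split: if_splits)
  moreover have "w \<noteq> []"
  proof
    assume "w = []"
    then show False using \<open>Poly_Mapping.lookup a (park (take k w)) \<noteq> 0\<close> PQS_nil[OF assms(2)] by simp
  qed
  ultimately show "is_pf w \<and> w \<noteq> []" by auto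
qed

context fixes q :: "'a::comm_ring_1" and x y z :: "nat list"
  assumes ne: "x \<noteq> []" "y \<noteq> []" "z \<noteq> []"
begin

interpretation W: wts "Max (set x)" "Max (set y)" "Max (set z)" "cap x y" "cap (x @ y) z" "cap x (y @ z)" "cap y z"
  by (rule wts_lists[OF ne])

lemma i1: "Kp q x y * Kp q (x @ y) z = KK q y z * Kp q x (y @ z)"
  using W.w1[of q] unfolding Kp_def Ks_def Kd_def Max_app[OF ne(1,2)] Max_app[OF ne(2,3)] by (simp only: mult.commute)
lemma i2: "Ks q x y * Kp q (x @ y) z = Kp q y z * Ks q x (y @ z)"
  using W.w2[of q] unfolding Kp_def Ks_def Kd_def Max_app[OF ne(1,2)] Max_app[OF ne(2,3)] by (simp only: mult.commute)
lemma i3: "KK q x y * Ks q (x @ y) z = Ks q y z * Ks q x (y @ z)"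
  using W.w3[of q] unfolding Kp_def Ks_def Kd_def Max_app[OF ne(1,2)] Max_app[OF ne(2,3)] by (simp only: mult.commute)
lemma i4: "Kd q x y * Kd q (x @ y) z = Kd q y z * Kd q x (y @ z)"
  using W.w4[of q] unfolding Kp_def Ks_def Kd_def Max_app[OF ne(1,2)] Max_app[OF ne(2,3)] by (simp only: mult.commute)
lemma i5: "Ks q x y * Kd q (x @ y) z = Kd q y z * Ks q x (y @ z)"
  using W.w5[of q] unfolding Kp_def Ks_def Kd_def Max_app[OF ne(1,2)] Max_app[OF ne(2,3)] by (simp only: mult.commute)
lemma i6: "Kp q x y * Kd q (x @ y) z = Ks q y z * Kd q x (y @ z)"
  using W.w6[of q] unfolding Kp_def Ks_def Kd_def Max_app[OF ne(1,2)] Max_app[OF ne(2,3)] by (simp only: mult.commute)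
lemma i7: "Kd q x y * Kp q (x @ y) z = Kp q y z * Kd q x (y @ z)"
  using W.w7[of q] unfolding Kp_def Ks_def Kd_def Max_app[OF ne(1,2)] Max_app[OF ne(2,3)] by (simp only: mult.commute)

end

theorem tridend: "q_tridendriform (q::'a::comm_ring_1) PQS (Prec q) (Dot q) (Succ q)"
  unfolding q_tridendriform_def
proof (intro conjI ballI)
  fix a b :: "nat list \<Rightarrow>\<^sub>0 'a" assume a: "a \<in> PQS" and b: "b \<in> PQS"
  show "Prec q a b \<in> PQS" by (rule rep_PQS[OF rep_Prec a])
  show "Dot q a b \<in> PQS" by (rule rep_PQS[OF rep_Dot a])
  show "Succ q a b \<in> PQS" by (rule rep_PQS[OF rep_Succ a])
next
  fix a b c :: "nat list \<Rightarrow>\<^sub>0 'a" assume a: "a \<in> PQS" and b: "b \<in> PQS" and c: "c \<in> PQS"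
  note z = PQS_nil[OF a] PQS_nil[OF b] PQS_nil[OF c]
  show "Prec q (Prec q a b) c = Prec q a (Prec q b c + Succ q b c + smult_pm q (Dot q b c))"
    by (rule AX[OF z rep_Prec rep_Prec rep_KK rep_Prec Kinv_Kp Kinv_KK i1])
  show "Prec q (Succ q a b) c = Succ q a (Prec q b c)"
    by (rule AX[OF z rep_Succ rep_Prec rep_Prec rep_Succ Kinv_Ks Kinv_Kp i2])
  show "Succ q (Prec q a b + Succ q a b + smult_pm q (Dot q a b)) c = Succ q a (Succ q b c)"
    by (rule AX[OF z rep_KK rep_Succ rep_Succ rep_Succ Kinv_KK Kinv_Ks i3])
  show "Dot q (Dot q a b) c = Dot q a (Dot q b c)"
    by (rule AX[OF z rep_Dot rep_Dot rep_Dot rep_Dot Kinv_Kd Kinv_Kd i4])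
  show "Dot q (Succ q a b) c = Succ q a (Dot q b c)"
    by (rule AX[OF z rep_Succ rep_Dot rep_Dot rep_Succ Kinv_Ks Kinv_Kd i5])
  show "Dot q (Prec q a b) c = Dot q a (Succ q b c)"
    by (rule AX[OF z rep_Prec rep_Dot rep_Succ rep_Dot Kinv_Kp Kinv_Ks i6])
  show "Prec q (Dot q a b) c = Dot q a (Prec q b c)"
    by (rule AX[OF z rep_Dot rep_Prec rep_Prec rep_Dot Kinv_Kd Kinv_Kp i7])
qed


definition F1 :: "nat \<Rightarrow> nat list \<Rightarrow> nat list" where
  "F1 j f = filter (\<lambda>v. v \<le> j) f"
definition F2 :: "nat \<Rightarrow> nat list \<Rightarrow> nat list" where
  "F2 j f = map (\<lambda>v. v - j) (filter (\<lambda>v. j < v) f)"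
definition Jset :: "nat list \<Rightarrow> nat set" where
  "Jset f = {j. j \<le> length f \<and> length (F1 j f) = j \<and> is_pf (F1 j f) \<and> is_pf (F2 j f)}"

lemma Jset_finite: "finite (Jset f)"
  unfolding Jset_def by (rule finite_subset[of _ "{..length f}"]) auto

lemma nth_filter_rank:
  assumes "i < length xs" "P (xs ! i)"
  shows "filter P xs ! length (filter P (take i xs)) = xs ! i"
proof -
  have "xs = take i xs @ xs ! i # drop (Suc i) xs" using assms(1) by (rule id_take_nth_drop)
  then have "filter P xs = filter P (take i xs) @ xs ! i # filter P (drop (Suc i) xs)"
    using assms(2) by (metis filter.simps(2) filter_append)
  then show ?thesis by (simp add: nth_append)
qed

lemma rank_lt:
  assumes "i < length xs" "P (xs ! i)"
  shows "length (filter P (take i xs)) < length (filter P xs)"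
proof -
  have "xs = take i xs @ xs ! i # drop (Suc i) xs" using assms(1) by (rule id_take_nth_drop)
  then have "filter P xs = filter P (take i xs) @ xs ! i # filter P (drop (Suc i) xs)"
    using assms(2) by (metis filter.simps(2) filter_append)
  then show ?thesis by simp
qed

lemma rank_mono_le: "a \<le> b \<Longrightarrow> length (filter P (take a xs)) \<le> length (filter P (take b xs))"
proof -
  assume "a \<le> b"
  then have "take b xs = take a xs @ drop a (take b xs)" by (metis append_take_drop_id min.absorb1 take_take)
  then show ?thesis by (metis filter_append le_add1 length_append)
qed

lemma rank_strict:
  assumes "i < i'" "i' \<le> length xs" "P (xs ! i)"
  shows "length (filter P (take i xs)) < length (filter P (take i' xs))"
proof -
  have "take (Suc i) xs = take i xs @ [xs ! i]" using assms by (simp add: take_Suc_conv_app_nth)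
  then have "length (filter P (take (Suc i) xs)) = Suc (length (filter P (take i xs)))" using assms(3) by simp
  moreover have "length (filter P (take (Suc i) xs)) \<le> length (filter P (take i' xs))"
    using assms by (intro rank_mono_le) simp
  ultimately show ?thesis by simp
qed

lemma len_filter_take_card: "i \<le> length xs \<Longrightarrow> length (filter P (take i xs)) = card {i'. i' < i \<and> P (xs ! i')}"
  unfolding length_filter_conv_card by (intro arg_cong[where f=card]) auto

lemma filter_le_gt_len: "length (filter (\<lambda>v. v \<le> (j::nat)) f) + length (filter (\<lambda>v. j < v) f) = length f"
  by (induction f) auto

lemma rank_card:
  assumes d: "\<delta> permutes {..<(n::nat)}" and S: "S \<subseteq> {..<n}" and sm: "strict_mono_on S (inv \<delta>)"
    and i: "i < n" "\<delta> i \<in> S"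
  shows "card {i'. i' < i \<and> \<delta> i' \<in> S} = card {s \<in> S. s < \<delta> i}"
proof -
  have inj: "inj \<delta>" using permutes_inj[OF d] .
  have iv: "\<And>x. inv \<delta> (\<delta> x) = x" "\<And>x. \<delta> (inv \<delta> x) = x" using permutes_inverses[OF d] by auto
  have key: "\<And>i'. \<delta> i' \<in> S \<Longrightarrow> i' < i \<longleftrightarrow> \<delta> i' < \<delta> i"
  proof -
    fix i' assume i': "\<delta> i' \<in> S"
    have dir: "\<And>a b. \<delta> a \<in> S \<Longrightarrow> \<delta> b \<in> S \<Longrightarrow> \<delta> a < \<delta> b \<Longrightarrow> a < b"
      using sm iv unfolding strict_mono_on_def by metis
    show "i' < i \<longleftrightarrow> \<delta> i' < \<delta> i"
    proof
      assume "i' < i"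
      moreover have "\<delta> i' \<noteq> \<delta> i" using \<open>i' < i\<close> by (simp add: inj_eq[OF inj])
      ultimately show "\<delta> i' < \<delta> i" using dir[OF i(2) i'] by (metis linorder_neqE_nat not_less_iff_gr_or_eq)
    qed (rule dir[OF i' i(2)])
  qed
  have "\<delta> ` {i'. i' < i \<and> \<delta> i' \<in> S} = {s \<in> S. s < \<delta> i}"
  proof (intro set_eqI iffI)
    fix s assume "s \<in> \<delta> ` {i'. i' < i \<and> \<delta> i' \<in> S}"
    then show "s \<in> {s \<in> S. s < \<delta> i}" using key by auto
  next
    fix s assume s: "s \<in> {s \<in> S. s < \<delta> i}"
    then have "\<delta> (inv \<delta> s) \<in> S" "\<delta> (inv \<delta> s) < \<delta> i" using iv by auto
    then have "inv \<delta> s < i" using key by blast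
    then show "s \<in> \<delta> ` {i'. i' < i \<and> \<delta> i' \<in> S}" using s iv by (intro image_eqI[of _ _ "inv \<delta> s"]) auto
  qed
  moreover have "inj_on \<delta> {i'. i' < i \<and> \<delta> i' \<in> S}" using inj by (rule inj_on_subset) simp
  ultimately show ?thesis by (metis card_image)
qed

lemma card_preimage:
  assumes d: "\<delta> permutes {..<(n::nat)}"
  shows "card {i. i < n \<and> P (\<delta> i)} = card {s. s < n \<and> P s}"
proof -
  have "\<delta> ` {i. i < n \<and> P (\<delta> i)} = {s. s < n \<and> P s}"
  proof (intro set_eqI iffI)
    fix s assume "s \<in> {s. s < n \<and> P s}"
    then show "s \<in> \<delta> ` {i. i < n \<and> P (\<delta> i)}"
      using permutes_inverses[OF d] permutes_in_image[OF permutes_inv[OF d]]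
      by (intro image_eqI[of _ _ "inv \<delta> s"]) auto
  qed (use permutes_in_image[OF d] in auto)
  moreover have "inj_on \<delta> {i. i < n \<and> P (\<delta> i)}" using permutes_inj[OF d] by (rule inj_on_subset) simp
  ultimately show ?thesis by (metis card_image)
qed


lemma pf_vals: "is_pf f \<Longrightarrow> v \<in> set f \<Longrightarrow> 1 \<le> v \<and> v \<le> length f"
  unfolding is_pf_pfc using pfc_bound by (auto simp: pfc_def)

lemma cop_canon:
  assumes J: "j \<in> Jset f"
  shows "(F1 j f, F2 j f) \<in> cop_terms f"
proof -
  let ?n = "length f"
  let ?P = "\<lambda>v. v \<le> j" and ?Q = "\<lambda>v. j < v"
  have lP: "length (filter ?P f) = j" using J unfolding Jset_def F1_def by simp
  have lQ: "length (filter ?Q f) = ?n - j" using filter_le_gt_len[of j f] lP by simp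
  have jn: "j \<le> ?n" using J unfolding Jset_def by simp
  define d where "d i = (if i < ?n then (if f ! i \<le> j then length (filter ?P (take i f))
                         else j + length (filter ?Q (take i f))) else i)" for i
  have low: "\<And>i. i < ?n \<Longrightarrow> f ! i \<le> j \<Longrightarrow> d i < j"
    unfolding d_def using rank_lt[of _ f ?P] lP by simp
  have high: "\<And>i. i < ?n \<Longrightarrow> \<not> f ! i \<le> j \<Longrightarrow> j \<le> d i \<and> d i < ?n"
    unfolding d_def using rank_lt[of _ f ?Q] lQ jn by fastforce
  have lowmono: "\<And>x y. x < y \<Longrightarrow> y < ?n \<Longrightarrow> f ! x \<le> j \<Longrightarrow> f ! y \<le> j \<Longrightarrow> d x < d y"
    unfolding d_def using rank_strict[of _ _ f ?P] by simp
  have highmono: "\<And>x y. x < y \<Longrightarrow> y < ?n \<Longrightarrow> \<not> f ! x \<le> j \<Longrightarrow> \<not> f ! y \<le> j \<Longrightarrow> d x < d y"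
    unfolding d_def using rank_strict[of _ _ f ?Q] by simp
  have ne: "\<And>x y. x < y \<Longrightarrow> y < ?n \<Longrightarrow> d x \<noteq> d y"
  proof -
    fix x y assume xy: "x < y" "y < ?n"
    show "d x \<noteq> d y"
    proof (cases "f ! x \<le> j"; cases "f ! y \<le> j")
      assume "f ! x \<le> j" "f ! y \<le> j" then show ?thesis using lowmono xy by fastforce
    next
      assume a: "f ! x \<le> j" "\<not> f ! y \<le> j"
      have "d x < j" using low[OF _ a(1)] xy by simp
      moreover have "j \<le> d y" using high[OF xy(2) a(2)] by simp
      ultimately show ?thesis by simp
    next
      assume a: "\<not> f ! x \<le> j" "f ! y \<le> j"
      have "d y < j" using low[OF xy(2) a(2)] by simp
      moreover have "j \<le> d x" using high[OF _ a(1)] xy by simp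
      ultimately show ?thesis by simp
    next
      assume "\<not> f ! x \<le> j" "\<not> f ! y \<le> j" then show ?thesis using highmono xy by fastforce
    qed
  qed
  have inj: "inj_on d {..<?n}"
  proof (rule inj_onI)
    fix x y assume "x \<in> {..<?n}" "y \<in> {..<?n}" "d x = d y"
    then show "x = y" using ne[of x y] ne[of y x] by (cases x y rule: linorder_cases) auto
  qed
  have img: "d ` {..<?n} \<subseteq> {..<?n}"
  proof
    fix s assume "s \<in> d ` {..<?n}"
    then obtain i where "i < ?n" "s = d i" by auto
    then show "s \<in> {..<?n}" using low high jn by (cases "f ! i \<le> j") fastforce+
  qed
  have perm: "d permutes {..<?n}"
  proof (rule bij_imp_permutes)
    show "bij_betw d {..<?n} {..<?n}" unfolding bij_betw_def
      using inj img endo_inj_surj[of "{..<?n}" d] by simp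
    show "\<And>x. x \<notin> {..<?n} \<Longrightarrow> d x = x" unfolding d_def by simp
  qed
  have iv: "\<And>x. d (inv d x) = x" "\<And>x. inv d (d x) = x" using permutes_inverses[OF perm] by auto
  have ivin: "\<And>x. x < ?n \<Longrightarrow> inv d x < ?n" using permutes_in_image[OF permutes_inv[OF perm]] by simp
  have sm1: "strict_mono_on {..<j} (inv d)"
  proof (rule strict_mono_onI)
    fix a b assume ab: "a \<in> {..<j}" "b \<in> {..<j}" "a < b"
    let ?x = "inv d a" and ?y = "inv d b"
    have xy: "?x < ?n" "?y < ?n" using ab jn ivin by auto
    have lx: "f ! ?x \<le> j" using high[OF xy(1)] iv ab by fastforce
    have ly: "f ! ?y \<le> j" using high[OF xy(2)] iv ab by fastforce
    show "?x < ?y"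
    proof (rule ccontr)
      assume "\<not> ?x < ?y"
      then have "?y < ?x \<or> ?y = ?x" by auto
      then show False
      proof
        assume "?y < ?x" then have "d ?y < d ?x" using lowmono xy lx ly by blast
        then show False using iv ab by simp
      next
        assume "?y = ?x" then have "d ?y = d ?x" by simp
        then show False using iv ab by simp
      qed
    qed
  qed
  have sm2: "strict_mono_on {j..<?n} (inv d)"
  proof (rule strict_mono_onI)
    fix a b assume ab: "a \<in> {j..<?n}" "b \<in> {j..<?n}" "a < b"
    let ?x = "inv d a" and ?y = "inv d b"
    have xy: "?x < ?n" "?y < ?n" using ab ivin by auto
    have lx: "\<not> f ! ?x \<le> j" using low[OF xy(1)] iv ab by fastforce
    have ly: "\<not> f ! ?y \<le> j" using low[OF xy(2)] iv ab by fastforce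
    show "?x < ?y"
    proof (rule ccontr)
      assume "\<not> ?x < ?y"
      then have "?y < ?x \<or> ?y = ?x" by auto
      then show False
      proof
        assume "?y < ?x" then have "d ?y < d ?x" using highmono xy lx ly by blast
        then show False using iv ab by simp
      next
        assume "?y = ?x" then have "d ?y = d ?x" by simp
        then show False using iv ab by simp
      qed
    qed
  qed
  have lF1: "length (F1 j f) = j" using lP unfolding F1_def .
  have eq: "\<forall>i<?n. f ! i = times_P (F1 j f) (F2 j f) ! d i"
  proof (intro allI impI)
    fix i assume i: "i < ?n"
    show "f ! i = times_P (F1 j f) (F2 j f) ! d i"
    proof (cases "f ! i \<le> j")
      case True
      then have "d i = length (filter ?P (take i f))" unfolding d_def using i by simp
      moreover have "d i < j" using low i True by simp
      ultimately show ?thesis unfolding times_P_def F1_def using nth_filter_rank[OF i, of ?P] True lP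
        by (simp add: nth_append)
    next
      case False
      let ?r = "length (filter ?Q (take i f))"
      have di: "d i = j + ?r" unfolding d_def using i False by simp
      have r: "?r < length (filter ?Q f)" using rank_lt[OF i, of ?Q] False by simp
      have "filter ?Q f ! ?r = f ! i" using nth_filter_rank[OF i, of ?Q] False by simp
      then show ?thesis unfolding times_P_def F1_def F2_def di using lP r False
        by (simp add: nth_append)
    qed
  qed
  have "length (F1 j f) + length (F2 j f) = ?n" unfolding F1_def F2_def using filter_le_gt_len[of j f] by simp
  moreover have "is_pf (F1 j f)" "is_pf (F2 j f)" using J unfolding Jset_def by auto
  ultimately show ?thesis unfolding cop_terms_def mem_Collect_eq case_prod_conv lF1
    using perm sm1 sm2 eq by blast
qed


lemma cop_sub:
  assumes "(f1, f2) \<in> cop_terms f"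
  shows "length f1 \<in> Jset f \<and> f1 = F1 (length f1) f \<and> f2 = F2 (length f1) f"
proof -
  let ?n = "length f" and ?j = "length f1"
  let ?P = "\<lambda>v. v \<le> ?j" and ?Q = "\<lambda>v. ?j < v"
  let ?t = "times_P f1 f2"
  obtain \<delta> where pf: "is_pf f1" "is_pf f2" and len: "?j + length f2 = ?n"
    and d: "\<delta> permutes {..<?n}" and sm1: "strict_mono_on {..<?j} (inv \<delta>)"
    and sm2: "strict_mono_on {?j..<?n} (inv \<delta>)" and eq: "\<forall>i<?n. f ! i = ?t ! (\<delta> i)"
    using assms unfolding cop_terms_def by blast
  have jn: "?j \<le> ?n" using len by simp
  have iv: "\<And>x. \<delta> (inv \<delta> x) = x" "\<And>x. inv \<delta> (\<delta> x) = x" using permutes_inverses[OF d] by auto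
  have din: "\<And>i. i < ?n \<Longrightarrow> \<delta> i < ?n" using permutes_in_image[OF d] by simp
  have ivin: "\<And>x. x < ?n \<Longrightarrow> inv \<delta> x < ?n" using permutes_in_image[OF permutes_inv[OF d]] by simp
  have t1: "\<And>k. k < ?j \<Longrightarrow> ?t ! k = f1 ! k" unfolding times_P_def by (simp add: nth_append)
  have t2: "\<And>k. k < length f2 \<Longrightarrow> ?t ! (?j + k) = f2 ! k + ?j" unfolding times_P_def by (simp add: nth_append)
  have v1: "\<And>k. k < ?j \<Longrightarrow> f1 ! k \<le> ?j" using pf_vals[OF pf(1)] by simp
  have v2: "\<And>k. k < length f2 \<Longrightarrow> 1 \<le> f2 ! k" using pf_vals[OF pf(2)] by simp
  have lowiff: "\<And>i. i < ?n \<Longrightarrow> f ! i \<le> ?j \<longleftrightarrow> \<delta> i < ?j"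
  proof -
    fix i assume i: "i < ?n"
    show "f ! i \<le> ?j \<longleftrightarrow> \<delta> i < ?j"
    proof (cases "\<delta> i < ?j")
      case True then show ?thesis using eq i t1 v1 by simp
    next
      case False
      then obtain k where k: "\<delta> i = ?j + k" by (metis le_add_diff_inverse not_less)
      then have kk: "k < length f2" using din[OF i] len by simp
      then show ?thesis using eq i t2 v2[OF kk] k False by simp
    qed
  qed
  have rlow: "\<And>i. i < ?n \<Longrightarrow> \<delta> i < ?j \<Longrightarrow> length (filter ?P (take i f)) = \<delta> i"
  proof -
    fix i assume i: "i < ?n" "\<delta> i < ?j"
    have "length (filter ?P (take i f)) = card {i'. i' < i \<and> ?P (f ! i')}" using i by (simp add: len_filter_take_card)
    also have "{i'. i' < i \<and> ?P (f ! i')} = {i'. i' < i \<and> \<delta> i' \<in> {..<?j}}" using lowiff i by auto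
    also have "card \<dots> = card {s \<in> {..<?j}. s < \<delta> i}"
      by (rule rank_card[OF d _ sm1 i(1)]) (use jn i in auto)
    also have "{s \<in> {..<?j}. s < \<delta> i} = {..<\<delta> i}" using i by auto
    finally show "length (filter ?P (take i f)) = \<delta> i" by simp
  qed
  have rhigh: "\<And>i. i < ?n \<Longrightarrow> \<not> \<delta> i < ?j \<Longrightarrow> length (filter ?Q (take i f)) = \<delta> i - ?j"
  proof -
    fix i assume i: "i < ?n" "\<not> \<delta> i < ?j"
    have "length (filter ?Q (take i f)) = card {i'. i' < i \<and> ?Q (f ! i')}" using i by (simp add: len_filter_take_card)
    also have "{i'. i' < i \<and> ?Q (f ! i')} = {i'. i' < i \<and> \<delta> i' \<in> {?j..<?n}}"
    proof (intro set_eqI)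
      fix i' show "i' \<in> {i'. i' < i \<and> ?Q (f ! i')} \<longleftrightarrow> i' \<in> {i'. i' < i \<and> \<delta> i' \<in> {?j..<?n}}"
      proof (cases "i' < i")
        case True
        then have "i' < ?n" using i by simp
        then have A: "f ! i' \<le> ?j \<longleftrightarrow> \<delta> i' < ?j" "\<delta> i' < ?n" using lowiff[of i'] din[of i'] by auto
        show ?thesis using True A by (cases "f ! i' \<le> ?j") auto
      qed simp
    qed
    also have "card \<dots> = card {s \<in> {?j..<?n}. s < \<delta> i}"
    proof (rule rank_card[OF d _ sm2 i(1)])
      have "\<delta> i < ?n" using din i by simp
      then show "{?j..<?n} \<subseteq> {..<?n}" "\<delta> i \<in> {?j..<?n}" using i by auto
    qed
    also have "{s \<in> {?j..<?n}. s < \<delta> i} = {?j..<\<delta> i}" using i din[OF i(1)] by auto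
    finally show "length (filter ?Q (take i f)) = \<delta> i - ?j" by simp
  qed
  have lP: "length (filter ?P f) = ?j"
  proof -
    have "length (filter ?P f) = card {i. i < ?n \<and> ?P (f ! i)}" by (simp add: length_filter_conv_card)
    also have "{i. i < ?n \<and> ?P (f ! i)} = {i. i < ?n \<and> \<delta> i < ?j}" using lowiff by auto
    also have "card \<dots> = card {s. s < ?n \<and> s < ?j}" by (rule card_preimage[OF d])
    also have "{s. s < ?n \<and> s < ?j} = {..<?j}" using jn by auto
    finally show ?thesis by simp
  qed
  have lQ: "length (filter ?Q f) = length f2" using filter_le_gt_len[of ?j f] lP len by simp
  have e1: "F1 ?j f = f1"
  proof (rule nth_equalityI)
    show "length (F1 ?j f) = length f1" unfolding F1_def using lP by simp
    fix k assume "k < length (F1 ?j f)"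
    then have k: "k < ?j" unfolding F1_def using lP by simp
    let ?i = "inv \<delta> k"
    have i: "?i < ?n" "\<delta> ?i = k" using ivin iv k jn by auto
    have Pi: "?P (f ! ?i)" using lowiff[OF i(1)] i k by simp
    have "filter ?P f ! k = f ! ?i" using nth_filter_rank[OF i(1), of ?P] Pi rlow[OF i(1)] i k by simp
    also have "\<dots> = f1 ! k" using eq i t1 k by simp
    finally show "F1 ?j f ! k = f1 ! k" unfolding F1_def .
  qed
  have e2: "F2 ?j f = f2"
  proof (rule nth_equalityI)
    show "length (F2 ?j f) = length f2" unfolding F2_def using lQ by simp
    fix k assume "k < length (F2 ?j f)"
    then have k: "k < length f2" unfolding F2_def using lQ by simp
    let ?i = "inv \<delta> (?j + k)"
    have i: "?i < ?n" "\<delta> ?i = ?j + k" using ivin iv k len by auto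
    have Qi: "?Q (f ! ?i)" using lowiff[OF i(1)] i by simp
    have "filter ?Q f ! k = f ! ?i" using nth_filter_rank[OF i(1), of ?Q] Qi rhigh[OF i(1)] i by simp
    also have "\<dots> = f2 ! k + ?j" using eq i t2 k by simp
    finally show "F2 ?j f ! k = f2 ! k" unfolding F2_def using k lQ by simp
  qed
  have "?j \<in> Jset f" unfolding Jset_def using jn e1 e2 pf by simp
  then show ?thesis using e1 e2 by simp
qed

lemma cop_terms_eq: "cop_terms f = (\<lambda>j. (F1 j f, F2 j f)) ` Jset f"
proof (intro set_eqI iffI)
  fix p assume "p \<in> cop_terms f"
  then obtain f1 f2 where p: "p = (f1, f2)" "(f1, f2) \<in> cop_terms f" by (cases p) auto
  then show "p \<in> (\<lambda>j. (F1 j f, F2 j f)) ` Jset f" using cop_sub[OF p(2)] by force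
qed (auto intro: cop_canon)

lemma F1_inj: "inj_on (\<lambda>j. (F1 j f, F2 j f)) (Jset f)"
proof (rule inj_onI)
  fix x y assume xy: "x \<in> Jset f" "y \<in> Jset f" "(F1 x f, F2 x f) = (F1 y f, F2 y f)"
  have a: "length (F1 x f) = x" "length (F1 y f) = y" "F1 x f = F1 y f"
  proof -
    show "length (F1 x f) = x" using xy(1) unfolding Jset_def mem_Collect_eq by blast
    show "length (F1 y f) = y" using xy(2) unfolding Jset_def mem_Collect_eq by blast
    show "F1 x f = F1 y f" using xy(3) prod.inject by blast
  qed
  have "x = length (F1 x f)" using a(1) by simp
  also have "\<dots> = length (F1 y f)" using a(3) by simp
  also have "\<dots> = y" using a(2) by simp
  finally show "x = y" .
qed

lemma Jset_Nil: "Jset [] = {0}"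
  unfolding Jset_def F1_def F2_def is_pf_pfc pfc_def by auto

lemma cop_b_eq: "cop_b f = (\<Sum>j\<in>Jset f. Poly_Mapping.single (F1 j f, F2 j f) 1)"
proof (cases "f = []")
  case True then show ?thesis by (simp add: cop_b_def Jset_Nil F1_def F2_def)
next
  case False
  then have "cop_b f = (\<Sum>p\<in>cop_terms f. Poly_Mapping.single p 1)" unfolding cop_b_def by simp
  also have "\<dots> = (\<Sum>j\<in>Jset f. Poly_Mapping.single (F1 j f, F2 j f) 1)"
    unfolding cop_terms_eq by (subst sum.reindex[OF F1_inj]) simp
  finally show ?thesis .
qed

lemma lookup_cop_b: "Poly_Mapping.lookup (cop_b f :: (nat list \<times> nat list) \<Rightarrow>\<^sub>0 'a::comm_ring_1) (u, v) =
   (if length u \<in> Jset f \<and> F1 (length u) f = u \<and> F2 (length u) f = v then 1 else 0)"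
proof -
  have "Poly_Mapping.lookup (cop_b f) (u, v) = (\<Sum>j\<in>Jset f. if j = length u \<and> F1 (length u) f = u \<and> F2 (length u) f = v then 1 else 0)"
    unfolding cop_b_eq lookup_sum
  proof (rule sum.cong[OF refl])
    fix j assume "j \<in> Jset f"
    then have "length (F1 j f) = j" unfolding Jset_def by simp
    then show "Poly_Mapping.lookup (Poly_Mapping.single (F1 j f, F2 j f) 1) (u, v) =
      (if j = length u \<and> F1 (length u) f = u \<and> F2 (length u) f = v then 1 else 0)"
      by (auto simp: lookup_single when_def)
  qed
  also have "\<dots> = (if length u \<in> Jset f \<and> F1 (length u) f = u \<and> F2 (length u) f = v then 1 else 0)"
  proof (cases "length u \<in> Jset f")
    case True then show ?thesis by (simp add: Jset_finite sum.delta' if_distrib cong: if_cong)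
  next
    case False
    then show ?thesis by (auto intro!: sum.neutral)

  qed
  finally show ?thesis .
qed


lemma cl_low: "a \<le> Suc j \<Longrightarrow> cl h a = cl (F1 j h) a"
  unfolding cl_def F1_def by (induction h) auto

lemma cl_high: "j < a \<Longrightarrow> cl h a = length (F1 j h) + cl (F2 j h) (a - j)"
  unfolding cl_def F1_def F2_def by (induction h) auto

lemma cnt_split: "a \<le> Suc j \<Longrightarrow> cl h a + length (filter (\<lambda>y. a \<le> y \<and> y \<le> j) h) = length (F1 j h)"
  unfolding cl_def F1_def by (induction h) auto

definition CC :: "nat \<Rightarrow> nat list \<Rightarrow> bool" where
  "CC j h \<longleftrightarrow> (\<forall>a\<in>set h. a \<le> j \<longrightarrow> length (filter (\<lambda>y. a \<le> y \<and> y \<le> j) h) \<le> Suc j - a)"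

lemma set_F1: "set (F1 j h) = {v \<in> set h. v \<le> j}" unfolding F1_def by auto
lemma set_F2: "set (F2 j h) = (\<lambda>v. v - j) ` {v \<in> set h. j < v}" unfolding F2_def by auto

lemma B1: assumes "v \<le> j" shows "phi h v = phi (F1 j h) v"
proof -
  have S: "{a \<in> set h. a \<le> v} = {a \<in> set (F1 j h). a \<le> v}" using assms by (auto simp: set_F1)
  have "\<And>a. a \<in> {a \<in> set h. a \<le> v} \<Longrightarrow> cl h a + 1 + v - a = cl (F1 j h) a + 1 + v - a"
    using assms cl_low[of _ j h] by simp
  then show ?thesis unfolding phi_def S by (metis (no_types, lifting) S image_cong)
qed

lemma phi_le_self: assumes "\<forall>y\<in>set H. 1 \<le> y" "b \<in> set H" shows "phi H b \<le> b"
proof -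
  define m where "m = Min (set H)"
  have m: "m \<in> set H" using assms(2) unfolding m_def by (intro Min_in) auto
  have "\<forall>y\<in>set H. m \<le> y" unfolding m_def by simp
  then have "cl H m = 0" "m \<le> b" using assms unfolding cl_def by (auto simp: filter_empty_conv not_less)
  moreover have "1 \<le> m" using assms(1) m by blast
  ultimately show ?thesis using phi_le[of m H b] m by simp
qed

lemma B2: assumes C: "CC j h" and v: "v \<in> set h" "j < v"
  shows "phi h v = length (F1 j h) + phi (F2 j h) (v - j)"
proof (rule antisym)
  let ?i = "length (F1 j h)" and ?H = "F2 j h"
  have vH: "v - j \<in> set ?H" using v by (auto simp: set_F2)
  obtain b where b: "b \<in> set ?H" "b \<le> v - j" "phi ?H (v - j) = cl ?H b + 1 + (v - j) - b"
    using phi_attained[OF vH order_refl] by blast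
  obtain a where a: "a \<in> set h" "j < a" "b = a - j" using b(1) by (auto simp: set_F2)
  have "phi h v \<le> cl h a + 1 + v - a" by (rule phi_le) (use a b v in auto)
  also have "\<dots> = ?i + (cl ?H b + 1 + (v - j) - b)" using cl_high[OF a(2), of h] a b v by (simp add: add.assoc)
  finally show "phi h v \<le> ?i + phi ?H (v - j)" using b by simp
next
  let ?i = "length (F1 j h)" and ?H = "F2 j h"
  have vH: "v - j \<in> set ?H" using v by (auto simp: set_F2)
  obtain a where a: "a \<in> set h" "a \<le> v" "phi h v = cl h a + 1 + v - a"
    using phi_attained[OF v(1) order_refl] by blast
  show "?i + phi ?H (v - j) \<le> phi h v"
  proof (cases "a \<le> j")
    case True
    have "length (filter (\<lambda>y. a \<le> y \<and> y \<le> j) h) \<le> Suc j - a" using C a True unfolding CC_def by blast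
    moreover have "cl h a + length (filter (\<lambda>y. a \<le> y \<and> y \<le> j) h) = ?i" using True by (intro cnt_split) simp
    ultimately have "?i + (v - j) \<le> phi h v" using a True v by linarith
    moreover have "phi ?H (v - j) \<le> v - j" by (rule phi_le_self[OF _ vH]) (auto simp: set_F2)
    ultimately show ?thesis by linarith
  next
    case False
    have aH: "a - j \<in> set ?H" using a False by (auto simp: set_F2)
    have "phi ?H (v - j) \<le> cl ?H (a - j) + 1 + (v - j) - (a - j)" by (rule phi_le[OF aH]) (use a False in auto)
    moreover have "cl h a = ?i + cl ?H (a - j)" using cl_high False by simp
    ultimately show ?thesis using a False by simp
  qed
qed

lemma phi_low_bound: "v \<in> set (F1 j h) \<Longrightarrow> phi (F1 j h) v \<le> length (F1 j h)"
  using phi_le_cl cl_less_len by (metis Suc_leI le_trans)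

lemma forward_park:
  assumes C: "CC j h"
  defines "i \<equiv> length (F1 j h)"
  shows "F1 i (park h) = park (F1 j h)" and "F2 i (park h) = park (F2 j h)"
    and "length (F1 i (park h)) = i"
proof -
  have lowiff: "\<And>v. v \<in> set h \<Longrightarrow> phi h v \<le> i \<longleftrightarrow> v \<le> j"
  proof -
    fix v assume v: "v \<in> set h"
    show "phi h v \<le> i \<longleftrightarrow> v \<le> j"
    proof (cases "v \<le> j")
      case True
      then have vv: "v \<in> set (F1 j h)" using v by (simp add: set_F1)
      then show ?thesis using B1[OF True, of h] phi_low_bound[OF vv] True unfolding i_def by simp
    next
      case False
      have "v - j \<in> set (F2 j h)" using v False by (auto simp: set_F2)
      then have "1 \<le> phi (F2 j h) (v - j)" by (rule phi_ge1)
      then show ?thesis using B2[OF C v] False unfolding i_def by simp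
    qed
  qed
  have e1: "F1 i (park h) = map (phi h) (F1 j h)"
    unfolding F1_def park_eq filter_map o_def using lowiff by (simp cong: filter_cong)
  also have "\<dots> = map (phi (F1 j h)) (F1 j h)" by (rule map_cong[OF refl]) (auto simp: set_F1 intro: B1)
  finally show p1: "F1 i (park h) = park (F1 j h)" by (simp add: park_eq)
  show "length (F1 i (park h)) = i" using p1 by (simp add: i_def)
  have "F2 i (park h) = map (\<lambda>v. phi h v - i) (filter (\<lambda>v. j < v) h)"
    unfolding F2_def park_eq filter_map o_def map_map using lowiff by (simp add: not_le[symmetric] cong: filter_cong)
  also have "\<dots> = map (\<lambda>v. phi (F2 j h) (v - j)) (filter (\<lambda>v. j < v) h)"
    by (rule map_cong[OF refl]) (auto simp: B2[OF C] i_def)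
  also have "\<dots> = park (F2 j h)" unfolding park_eq F2_def by simp
  finally show "F2 i (park h) = park (F2 j h)" .
qed

fun mrg :: "nat \<Rightarrow> nat list \<Rightarrow> nat list \<Rightarrow> nat list \<Rightarrow> nat list" where
  "mrg i [] A B = []"
| "mrg i (x # f) A B = (if x \<le> i then hd A # mrg i f (tl A) B else hd B # mrg i f A (tl B))"

lemma mrg_length[simp]: "length (mrg i f A B) = length f"
  by (induction f arbitrary: A B) auto

lemma mrg_filter:
  assumes "\<forall>a\<in>set A. a \<le> j" "\<forall>b\<in>set B. j < b"
    "length A = length (filter (\<lambda>v. v \<le> i) f)" "length B = length (filter (\<lambda>v. i < v) f)"
  shows "filter (\<lambda>v. v \<le> j) (mrg i f A B) = A \<and> filter (\<lambda>v. j < v) (mrg i f A B) = B"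
  using assms
proof (induction f arbitrary: A B)
  case Nil then show ?case by simp
next
  case (Cons x f)
  show ?case
  proof (cases "x \<le> i")
    case True
    then obtain a A' where A: "A = a # A'" using Cons.prems(3) by (cases A) auto
    then show ?thesis using Cons.IH[of A' B] Cons.prems True by auto
  next
    case False
    then obtain b B' where B: "B = b # B'" using Cons.prems(4) by (cases B) auto
    then show ?thesis using Cons.IH[of A B'] Cons.prems False by auto
  qed
qed

lemma mrg_nth:
  assumes "length A = length (filter (\<lambda>v. v \<le> i) f)" "length B = length (filter (\<lambda>v. i < v) f)" "p < length f"
  shows "mrg i f A B ! p = (if f ! p \<le> i then A ! length (filter (\<lambda>v. v \<le> i) (take p f))
                            else B ! length (filter (\<lambda>v. i < v) (take p f)))"
  using assms
proof (induction f arbitrary: A B p)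
  case Nil then show ?case by simp
next
  case (Cons x f)
  show ?case
  proof (cases "x \<le> i")
    case True
    then obtain a A' where A: "A = a # A'" using Cons.prems(1) by (cases A) auto
    show ?thesis
    proof (cases p)
      case 0 then show ?thesis using A True by simp
    next
      case (Suc p') then show ?thesis using Cons.IH[of A' B p'] Cons.prems A True by auto
    qed
  next
    case False
    then obtain b B' where B: "B = b # B'" using Cons.prems(2) by (cases B) auto
    show ?thesis
    proof (cases p)
      case 0 then show ?thesis using B False by simp
    next
      case (Suc p') then show ?thesis using Cons.IH[of A B' p'] Cons.prems B False by auto
    qed
  qed
qed

lemma mrg_unique:
  assumes "length h = length f" "\<forall>p<length f. h ! p \<le> j \<longleftrightarrow> f ! p \<le> i"
  shows "mrg i f (filter (\<lambda>v. v \<le> j) h) (filter (\<lambda>v. j < v) h) = h"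
  using assms
proof (induction f arbitrary: h)
  case Nil then show ?case by simp
next
  case (Cons x f)
  then obtain y h' where h: "h = y # h'" by (cases h) auto
  have yx: "y \<le> j \<longleftrightarrow> x \<le> i" using Cons.prems(2) h by force
  have IH: "mrg i f (filter (\<lambda>v. v \<le> j) h') (filter (\<lambda>v. j < v) h') = h'"
    using Cons.prems h by (intro Cons.IH) force+
  show ?case using h yx IH by (cases "x \<le> i") auto
qed


lemma reconstruct:
  assumes iJ: "length (F1 i f) = i"
    and A: "\<forall>a\<in>set A. a \<le> j" and B: "\<forall>b\<in>set B. j < b"
    and lA: "length A = length (F1 i f)" and lB: "length B = length (filter (\<lambda>v. i < v) f)"
    and C: "CC j (mrg i f A B)" and pA: "park A = F1 i f" and pB: "park (map (\<lambda>v. v - j) B) = F2 i f"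
  shows "park (mrg i f A B) = f"
proof -
  let ?h = "mrg i f A B"
  have lA': "length A = length (filter (\<lambda>v. v \<le> i) f)" using lA unfolding F1_def .
  have fl: "filter (\<lambda>v. v \<le> j) ?h = A" "filter (\<lambda>v. j < v) ?h = B"
    using mrg_filter[OF A B lA' lB] by auto
  have F1h: "F1 j ?h = A" using fl unfolding F1_def by simp
  have F2h: "F2 j ?h = map (\<lambda>v. v - j) B" using fl unfolding F2_def by simp
  show ?thesis
  proof (rule nth_equalityI)
    show "length (park ?h) = length f" by simp
    fix p assume "p < length (park ?h)"
    then have p: "p < length f" by simp
    have hp: "?h ! p \<in> set ?h" using p by simp
    show "park ?h ! p = f ! p"
    proof (cases "f ! p \<le> i")
      case True
      let ?r = "length (filter (\<lambda>v. v \<le> i) (take p f))"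
      have r: "?r < length A" using rank_lt[OF p, of "\<lambda>v. v \<le> i"] True lA' by simp
      have hpA: "?h ! p = A ! ?r" using mrg_nth[OF lA' lB p] True by simp
      have Aj: "A ! ?r \<le> j" using A r by simp
      have "park ?h ! p = phi ?h (A ! ?r)" using p hpA by (simp add: park_eq)
      also have "\<dots> = phi A (A ! ?r)" using B1[OF Aj, of ?h] F1h by simp
      also have "\<dots> = park A ! ?r" using r by (simp add: park_eq)
      also have "\<dots> = f ! p" using pA nth_filter_rank[OF p, of "\<lambda>v. v \<le> i"] True unfolding F1_def by simp
      finally show ?thesis .
    next
      case False
      let ?r = "length (filter (\<lambda>v. i < v) (take p f))"
      have r: "?r < length B" using rank_lt[OF p, of "\<lambda>v. i < v"] False lB by simp
      have hpB: "?h ! p = B ! ?r" using mrg_nth[OF lA' lB p] False by simp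
      have Bj: "j < B ! ?r" using B r by simp
      have "park ?h ! p = phi ?h (B ! ?r)" using p hpB by (simp add: park_eq)
      also have "\<dots> = length A + phi (map (\<lambda>v. v - j) B) (B ! ?r - j)"
        using B2[OF C, of "B ! ?r"] hp hpB Bj F1h F2h by simp
      also have "phi (map (\<lambda>v. v - j) B) (B ! ?r - j) = park (map (\<lambda>v. v - j) B) ! ?r"
        using r by (simp add: park_eq)
      also have "\<dots> = filter (\<lambda>v. i < v) f ! ?r - i" using pB r lB unfolding F2_def by simp
      also have "filter (\<lambda>v. i < v) f ! ?r = f ! p" using nth_filter_rank[OF p, of "\<lambda>v. i < v"] False by simp
      finally show ?thesis using lA iJ False by simp
    qed
  qed
qed

lemma cut_pf1:
  assumes w: "is_pf w" and l: "length (F1 j w) = j"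
  shows "is_pf (F1 j w)" "is_pf (F2 j w)"
proof -
  have pw: "pfc w" using w is_pf_pfc by simp
  show "is_pf (F1 j w)" unfolding is_pf_pfc pfc_def
  proof
    fix a assume "a \<in> set (F1 j w)"
    then have a: "a \<in> set w" "a \<le> j" by (auto simp: set_F1)
    then have "1 \<le> a \<and> a \<le> Suc (cl w a)" using pw unfolding pfc_def by blast
    then show "1 \<le> a \<and> a \<le> Suc (cl (F1 j w) a)" using cl_low[of a j w] a by simp
  qed
  show "is_pf (F2 j w)" unfolding is_pf_pfc pfc_def
  proof
    fix b assume "b \<in> set (F2 j w)"
    then obtain a where a: "a \<in> set w" "j < a" "b = a - j" by (auto simp: set_F2)
    have "a \<le> Suc (cl w a)" using pw a unfolding pfc_def by simp
    moreover have "cl w a = j + cl (F2 j w) (a - j)" using cl_high[OF a(2), of w] l by simp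
    ultimately show "1 \<le> b \<and> b \<le> Suc (cl (F2 j w) b)" using a unfolding a(3) by (intro conjI; linarith)
  qed
qed

lemma cut_pf2:
  assumes p1: "is_pf (F1 j w)" and p2: "is_pf (F2 j w)" and l: "length (F1 j w) = j"
  shows "is_pf w"
  unfolding is_pf_pfc pfc_def
proof
  fix a assume a: "a \<in> set w"
  show "1 \<le> a \<and> a \<le> Suc (cl w a)"
  proof (cases "a \<le> j")
    case True
    then have "a \<in> set (F1 j w)" using a by (simp add: set_F1)
    then show ?thesis using p1 cl_low[of a j w] True unfolding is_pf_pfc pfc_def by simp
  next
    case False
    then have "a - j \<in> set (F2 j w)" using a by (auto simp: set_F2)
    then have "a - j \<le> Suc (cl (F2 j w) (a - j))" using p2 unfolding is_pf_pfc pfc_def by simp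
    then show ?thesis using cl_high[of j a w] l False by simp
  qed
qed

lemma cut_CC:
  assumes w: "is_pf w" and l: "length (F1 j w) = j" and sub: "mset h \<subseteq># mset w"
  shows "CC j h"
  unfolding CC_def
proof (intro ballI impI)
  fix a assume a: "a \<in> set h" "a \<le> j"
  have aw: "a \<in> set w" using a set_mset_sub[OF sub] by auto
  have "a \<le> Suc (cl w a)" using w aw unfolding is_pf_pfc pfc_def by simp
  moreover have "cl w a + length (filter (\<lambda>y. a \<le> y \<and> y \<le> j) w) = j" using cnt_split[of a j w] a l by simp
  moreover have "length (filter (\<lambda>y. a \<le> y \<and> y \<le> j) h) \<le> length (filter (\<lambda>y. a \<le> y \<and> y \<le> j) w)"
    by (rule filter_len_sub[OF sub])
  ultimately show "length (filter (\<lambda>y. a \<le> y \<and> y \<le> j) h) \<le> Suc j - a" by linarith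
qed

definition MM :: "nat list \<Rightarrow> nat" where
  "MM x = (if x = [] then 0 else Max (set x))"

lemma MM_split:
  assumes "h \<noteq> []" "\<forall>y\<in>set h. 1 \<le> y"
  shows "F2 j h \<noteq> [] \<Longrightarrow> Max (set h) = MM (F2 j h) + j"
    and "F2 j h = [] \<Longrightarrow> Max (set h) \<le> j"
    and "F2 j h \<noteq> [] \<Longrightarrow> 1 \<le> MM (F2 j h)"
proof -
  have mh: "Max (set h) \<in> set h" using assms by simp
  show "F2 j h = [] \<Longrightarrow> Max (set h) \<le> j"
    using mh unfolding F2_def by (auto simp: filter_empty_conv)
  assume ne: "F2 j h \<noteq> []"
  then obtain a where a: "a \<in> set h" "j < a" unfolding F2_def by (auto simp: filter_empty_conv)
  then have jm: "j < Max (set h)" using mh by (meson Max_ge List.finite_set less_le_trans)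
  have "Max (set (F2 j h)) = Max (set h) - j"
  proof (rule Max_eqI)
    show "Max (set h) - j \<in> set (F2 j h)" using mh jm by (auto simp: set_F2)
    fix y assume "y \<in> set (F2 j h)"
    then obtain b where "b \<in> set h" "y = b - j" by (auto simp: set_F2)
    then show "y \<le> Max (set h) - j" by (simp add: diff_le_mono)
  qed simp
  then show "Max (set h) = MM (F2 j h) + j" using ne jm unfolding MM_def by simp
  show "1 \<le> MM (F2 j h)" using ne \<open>Max (set (F2 j h)) = Max (set h) - j\<close> jm unfolding MM_def by simp
qed

lemma cmp_split:
  assumes h: "h \<noteq> []" "\<forall>y\<in>set h. 1 \<le> y" and k: "k \<noteq> []" "\<forall>y\<in>set k. 1 \<le> y"
    and ne: "F2 j h \<noteq> [] \<or> F2 j k \<noteq> []"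
  shows "(Max (set h) < Max (set k) \<longleftrightarrow> MM (F2 j h) < MM (F2 j k)) \<and>
         (Max (set h) = Max (set k) \<longleftrightarrow> MM (F2 j h) = MM (F2 j k))"
  using MM_split[OF h, of j] MM_split[OF k, of j] ne
  by (cases "F2 j h = []"; cases "F2 j k = []") (auto simp: MM_def)

lemma cap_split: "cap h k = cap (F1 j h) (F1 j k) + cap (F2 j h) (F2 j k)"
proof -
  let ?s = "\<lambda>v. v - j"
  have e: "set h \<inter> set k = (set (F1 j h) \<inter> set (F1 j k)) \<union> {v \<in> set h \<inter> set k. j < v}"
    by (auto simp: set_F1)
  have inj: "inj_on ?s {v. j < v}" by (auto simp: inj_on_def)
  have "set (F2 j h) \<inter> set (F2 j k) = ?s ` {v \<in> set h \<inter> set k. j < v}"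
    unfolding set_F2 using inj by (auto simp: inj_on_def)
  moreover have "card (?s ` {v \<in> set h \<inter> set k. j < v}) = card {v \<in> set h \<inter> set k. j < v}"
  proof (rule card_image)
    show "inj_on ?s {v \<in> set h \<inter> set k. j < v}" by (rule inj_on_subset[OF inj]) auto
  qed
  moreover have "card (set h \<inter> set k) = card (set (F1 j h) \<inter> set (F1 j k)) + card {v \<in> set h \<inter> set k. j < v}"
  proof -
    have "card (set h \<inter> set k) = card ((set (F1 j h) \<inter> set (F1 j k)) \<union> {v \<in> set h \<inter> set k. j < v})"
      using e by (rule arg_cong)
    also have "\<dots> = card (set (F1 j h) \<inter> set (F1 j k)) + card {v \<in> set h \<inter> set k. j < v}"
      by (rule card_Un_disjoint) (auto simp: set_F1)
    finally show ?thesis .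
  qed
  ultimately show ?thesis unfolding cap_def by simp
qed


definition lin :: "('k \<Rightarrow> 'a::comm_ring_1) \<Rightarrow> ('k \<Rightarrow>\<^sub>0 'a) \<Rightarrow> 'a" where
  "lin G t = (\<Sum>p\<in>Poly_Mapping.keys t. Poly_Mapping.lookup t p * G p)"

lemma lin_superset: "finite K \<Longrightarrow> Poly_Mapping.keys t \<subseteq> K \<Longrightarrow> lin G t = (\<Sum>p\<in>K. Poly_Mapping.lookup t p * G p)"
  unfolding lin_def by (rule sum.mono_neutral_left) (auto simp: in_keys_iff)

lemma lin_add: "lin G (a + b) = lin G a + lin G b"
proof -
  let ?K = "Poly_Mapping.keys a \<union> Poly_Mapping.keys b"
  have f: "finite ?K" by simp
  have "lin G (a + b) = (\<Sum>p\<in>?K. Poly_Mapping.lookup (a + b) p * G p)"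
    by (rule lin_superset[OF f]) (rule keys_add)
  also have "\<dots> = (\<Sum>p\<in>?K. Poly_Mapping.lookup a p * G p) + (\<Sum>p\<in>?K. Poly_Mapping.lookup b p * G p)"
    by (simp add: lookup_add distrib_right sum.distrib)
  also have "\<dots> = lin G a + lin G b"
    using lin_superset[OF f, of a G] lin_superset[OF f, of b G] by simp
  finally show ?thesis .
qed

lemma lin_zero[simp]: "lin G 0 = 0" unfolding lin_def by simp

lemma lin_smult: "lin G (smult_pm c a) = c * lin G a"
proof -
  have "lin G (smult_pm c a) = (\<Sum>p\<in>Poly_Mapping.keys a. Poly_Mapping.lookup (smult_pm c a) p * G p)"
    by (rule lin_superset) (simp_all add: keys_smult)
  then show ?thesis unfolding lin_def by (simp add: sum_distrib_left mult_ac)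
qed

lemma lin_single: "lin G (Poly_Mapping.single k c) = c * G k"
proof -
  have "lin G (Poly_Mapping.single k c) = (\<Sum>p\<in>{k}. Poly_Mapping.lookup (Poly_Mapping.single k c) p * G p)"
    by (rule lin_superset) auto
  then show ?thesis by simp
qed

lemma lin_sum: "finite I \<Longrightarrow> lin G (\<Sum>i\<in>I. X i) = (\<Sum>i\<in>I. lin G (X i))"
  by (induction I rule: finite_induct) (simp_all add: lin_add)

lemma lin_cong: "(\<And>p. p \<in> Poly_Mapping.keys t \<Longrightarrow> G p = G' p) \<Longrightarrow> lin G t = lin G' t"
  unfolding lin_def by simp

lemma lin_sumG: "finite I \<Longrightarrow> lin (\<lambda>p. \<Sum>i\<in>I. H i p) t = (\<Sum>i\<in>I. lin (H i) t)"
  unfolding lin_def by (simp add: sum_distrib_left sum.swap[of _ I])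

lemma lin_multG: "lin (\<lambda>p. c * H p) t = c * lin H t"
  unfolding lin_def by (simp add: sum_distrib_left mult_ac)

lemma lookup_Cop: "Poly_Mapping.lookup (Cop x) p0 = lin (\<lambda>f. Poly_Mapping.lookup (cop_b f) p0) x"
  unfolding Cop_def lin_def by (simp add: lookup_sum)

lemma lin_cop_b: "lin H (cop_b f) = (\<Sum>j\<in>Jset f. H (F1 j f, F2 j f))"
  unfolding cop_b_eq by (simp add: lin_sum Jset_finite lin_single)

lemma lin_Cop: "lin H (Cop x) = lin (\<lambda>f. lin H (cop_b f)) x"
  by (simp add: Cop_def lin_sum lin_smult lin_def[of _ x])

lemma lin_bilin: "lin H (bilin B x y) = lin (\<lambda>f. lin (\<lambda>g. lin H (B f g)) y) x"
  unfolding bilin_def lin_def[of _ x] lin_def[of _ y]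
  by (simp add: lin_sum lin_smult sum_distrib_left mult_ac)

lemma lin_gprod: "lin H (gprod R E f g) = (\<Sum>(h, k)\<in>park_pairs R f g. E h k * H (h @ k))"
  unfolding gprod_def by (simp add: lin_sum park_pairs_finite case_prod_beta lin_smult lin_single)

lemma lookup_bilinT: "Poly_Mapping.lookup (bilinT B s t) p0 = lin (\<lambda>p. lin (\<lambda>r. Poly_Mapping.lookup (B p r) p0) t) s"
  unfolding bilinT_def lin_def by (simp add: lookup_sum sum_distrib_left mult_ac)

lemma lookup_tens: "Poly_Mapping.lookup (tens a b) (u, v) = Poly_Mapping.lookup a u * Poly_Mapping.lookup b v"
proof -
  have "Poly_Mapping.lookup (tens a b) (u, v) = lin (\<lambda>s. lin (\<lambda>t. if (s, t) = (u, v) then 1 else 0) b) a"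
    unfolding tens_def bilin_def lin_def by (simp add: lookup_sum lookup_single when_def sum_distrib_left mult_ac)
  also have "\<dots> = lin (\<lambda>s. if s = u then Poly_Mapping.lookup b v else 0) a"
  proof (rule lin_cong)
    fix s
    have "lin (\<lambda>t. if (s, t) = (u, v) then 1 else 0) b = (if s = u then lin (\<lambda>t. if t = v then 1 else 0) b else 0)"
      unfolding lin_def by simp
    also have "lin (\<lambda>t. if t = v then 1 else 0) b = Poly_Mapping.lookup b v"
      unfolding lin_def by (simp add: sum.delta in_keys_iff if_distrib[where f="\<lambda>x. _ * x"] cong: if_cong)
    finally show "lin (\<lambda>t. if (s, t) = (u, v) then 1 else 0) b = (if s = u then Poly_Mapping.lookup b v else 0)" .
  qed
  also have "\<dots> = Poly_Mapping.lookup a u * Poly_Mapping.lookup b v"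
    unfolding lin_def by (simp add: sum.delta in_keys_iff if_distrib[where f="\<lambda>x. _ * x"] cong: if_cong)
  finally show ?thesis .
qed


lemma prec_b_gprod: "prec_b q = gprod (\<lambda>a b. a > b) (\<lambda>h k. q ^ cap h k)"
  unfolding prec_b_def gprod_def by (intro ext) simp
lemma succ_b_gprod: "succ_b q = gprod (\<lambda>a b. a < b) (\<lambda>h k. q ^ cap h k)"
  unfolding succ_b_def gprod_def by (intro ext) simp
lemma dot_b_gprod: "dot_b q = gprod (\<lambda>a b. a = b) (\<lambda>h k. q ^ (cap h k - 1))"
  unfolding dot_b_def gprod_def by (intro ext) simp

lemma park_len_eq: "park x = a \<Longrightarrow> length x = length a"
  by (metis park_length)

lemma pf_eq_iff: "is_pf c \<Longrightarrow> (is_pf u \<and> park u = c) \<longleftrightarrow> u = c"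
  using park_pf by auto

lemma cap_Nil[simp]: "cap [] x = 0" "cap x [] = 0" unfolding cap_def by auto

lemma gprod_ne:
  assumes "a \<noteq> []" "c \<noteq> []"
  shows "Poly_Mapping.lookup (gprod R E a c) v =
   (if length v = length a + length c \<and> is_pf v \<and> park (take (length a) v) = a \<and> park (drop (length a) v) = c \<and>
       R (MM (take (length a) v)) (MM (drop (length a) v)) then E (take (length a) v) (drop (length a) v) else 0)"
proof (cases "park (take (length a) v) = a \<and> park (drop (length a) v) = c")
  case True
  from True have "length (park (take (length a) v)) = length a" "length (park (drop (length a) v)) = length c"
    by simp_all
  then have l: "length (take (length a) v) = length a" "length (drop (length a) v) = length c"
    by simp_all
  then have "take (length a) v \<noteq> []" "drop (length a) v \<noteq> []" "length v = length a + length c"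
    using assms by auto
  then show ?thesis using True by (simp add: lookup_gprod MM_def)
next
  case False then show ?thesis by (auto simp: lookup_gprod)
qed

lemma MM_pos: "is_pf v \<Longrightarrow> x \<noteq> [] \<Longrightarrow> set x \<subseteq> set v \<Longrightarrow> 1 \<le> MM x"
proof -
  assume a: "is_pf v" "x \<noteq> []" "set x \<subseteq> set v"
  then have "Max (set x) \<in> set v" by auto
  then show ?thesis using pf_vals[OF a(1)] a(2) by (simp add: MM_def)
qed

lemma lookup_ext_star:
  assumes pa: "is_pf a" and pc: "is_pf c"
  shows "Poly_Mapping.lookup (ext_star q a c) u =
   (if length u = length a + length c \<and> is_pf u \<and> park (take (length a) u) = a \<and> park (drop (length a) u) = c
    then q ^ cap (take (length a) u) (drop (length a) u) else 0)"
proof (cases "a = []")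
  case True
  then show ?thesis using pf_eq_iff[OF pc, of u] by (auto simp: ext_star_def lookup_single when_def dest: park_len_eq)
next
  case an: False
  show ?thesis
  proof (cases "c = []")
    case True
    have "(length u = length a \<and> is_pf u \<and> park u = a) \<longleftrightarrow> u = a" using pf_eq_iff[OF pa, of u] by auto
    then show ?thesis using True an by (auto simp: ext_star_def lookup_single when_def)
  next
    case cn: False
    let ?x = "take (length a) u" and ?y = "drop (length a) u"
    have "Poly_Mapping.lookup (ext_star q a c) u =
      Poly_Mapping.lookup (gprod (\<lambda>a b. a > b) (\<lambda>h k. q ^ cap h k) a c) u +
      q * Poly_Mapping.lookup (gprod (\<lambda>a b. a = b) (\<lambda>h k. q ^ (cap h k - 1)) a c) u +
      Poly_Mapping.lookup (gprod (\<lambda>a b. a < b) (\<lambda>h k. q ^ cap h k) a c) u"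
      using an cn by (simp add: ext_star_def prec_b_gprod succ_b_gprod dot_b_gprod lookup_add)
    also have "\<dots> = (if length u = length a + length c \<and> is_pf u \<and> park ?x = a \<and> park ?y = c then q ^ cap ?x ?y else 0)"
    proof (cases "length u = length a + length c \<and> is_pf u \<and> park ?x = a \<and> park ?y = c")
      case True
      then have ne: "?x \<noteq> []" "?y \<noteq> []" using an cn by auto
      have mx: "MM ?x \<in> set ?x" "MM ?y \<in> set ?y" using ne unfolding MM_def by auto
      have "MM ?x = MM ?y \<Longrightarrow> 1 \<le> cap ?x ?y"
      proof -
        assume "MM ?x = MM ?y"
        then have "MM ?x \<in> set ?x \<inter> set ?y" using mx by simp
        then have "0 < card (set ?x \<inter> set ?y)" by (intro card_gt_0_iff[THEN iffD2]) auto
        then show ?thesis unfolding cap_def by simp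
      qed
      then have "MM ?x = MM ?y \<Longrightarrow> q * q ^ (cap ?x ?y - 1) = q ^ cap ?x ?y" by (simp add: qm')
      then show ?thesis unfolding gprod_ne[OF an cn] using True by (cases "MM ?x" "MM ?y" rule: linorder_cases) auto
    next
      case False then show ?thesis unfolding gprod_ne[OF an cn] by auto
    qed
    finally show ?thesis .
  qed
qed

lemma lookup_ext_succ:
  assumes pa: "is_pf a" and pc: "is_pf c" and ne: "a \<noteq> [] \<or> c \<noteq> []"
  shows "Poly_Mapping.lookup (ext_succ q a c) v =
   (if length v = length a + length c \<and> is_pf v \<and> park (take (length a) v) = a \<and> park (drop (length a) v) = c \<and>
       MM (take (length a) v) < MM (drop (length a) v) then q ^ cap (take (length a) v) (drop (length a) v) else 0)"
proof (cases "a = []")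
  case True
  then have cn: "c \<noteq> []" using ne by simp
  have "v = c \<Longrightarrow> 1 \<le> MM v" using MM_pos[of v v] pc cn by simp
  then show ?thesis using True pf_eq_iff[OF pc, of v] by (auto simp: ext_succ_def lookup_single when_def MM_def dest: park_len_eq)
next
  case an: False
  show ?thesis
  proof (cases "c = []")
    case True then show ?thesis using an by (auto simp: ext_succ_def MM_def)
  next
    case False then show ?thesis using an by (simp add: ext_succ_def succ_b_gprod gprod_ne)
  qed
qed

lemma lookup_ext_prec:
  assumes pa: "is_pf a" and pc: "is_pf c" and ne: "a \<noteq> [] \<or> c \<noteq> []"
  shows "Poly_Mapping.lookup (ext_prec q a c) v =
   (if length v = length a + length c \<and> is_pf v \<and> park (take (length a) v) = a \<and> park (drop (length a) v) = c \<and>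
       MM (take (length a) v) > MM (drop (length a) v) then q ^ cap (take (length a) v) (drop (length a) v) else 0)"
proof (cases "c = []")
  case True
  then have an: "a \<noteq> []" using ne by simp
  have "v = a \<Longrightarrow> 1 \<le> MM v" using MM_pos[of v v] pa an by simp
  moreover have "(length v = length a \<and> is_pf v \<and> park v = a) \<longleftrightarrow> v = a" using pf_eq_iff[OF pa, of v] by auto
  ultimately show ?thesis using True an by (auto simp: ext_prec_def lookup_single when_def MM_def)
next
  case cn: False
  show ?thesis
  proof (cases "a = []")
    case True then show ?thesis using cn by (auto simp: ext_prec_def MM_def)
  next
    case False then show ?thesis using cn by (simp add: ext_prec_def prec_b_gprod gprod_ne)
  qed
qed

lemma lookup_ext_dot:
  assumes pa: "is_pf a" and pc: "is_pf c" and ne: "a \<noteq> [] \<or> c \<noteq> []"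
  shows "Poly_Mapping.lookup (ext_dot q a c) v =
   (if length v = length a + length c \<and> is_pf v \<and> park (take (length a) v) = a \<and> park (drop (length a) v) = c \<and>
       MM (take (length a) v) = MM (drop (length a) v) then q ^ (cap (take (length a) v) (drop (length a) v) - 1) else 0)"
proof (cases "a = [] \<or> c = []")
  case True
  have "\<not> (length v = length a + length c \<and> is_pf v \<and> park (take (length a) v) = a \<and> park (drop (length a) v) = c \<and>
       MM (take (length a) v) = MM (drop (length a) v))"
  proof
    assume h: "length v = length a + length c \<and> is_pf v \<and> park (take (length a) v) = a \<and> park (drop (length a) v) = c \<and>
       MM (take (length a) v) = MM (drop (length a) v)"
    show False
    proof (cases "a = []")
      case True
      then have "c \<noteq> []" "v \<noteq> []" using ne h by auto
      then have "1 \<le> MM v" using MM_pos[of v v] h by simp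
      then show False using h True by (simp add: MM_def)
    next
      case False
      then have "c = []" "v \<noteq> []" using ne h \<open>a = [] \<or> c = []\<close> by auto
      then have "1 \<le> MM v" using MM_pos[of v v] h by simp
      moreover have td: "take (length a) v = v" "drop (length a) v = []" using h \<open>c = []\<close> by simp_all
      moreover have "MM (take (length a) v) = MM (drop (length a) v)" using h by blast
      ultimately show False unfolding td by (simp add: MM_def)
    qed
  qed
  then show ?thesis using True by (auto simp: ext_dot_def)
next
  case False then show ?thesis by (simp add: ext_dot_def dot_b_gprod gprod_ne)
qed


lemma lowiff_CC: assumes C: "CC j h" and v: "v \<in> set h"
  shows "phi h v \<le> length (F1 j h) \<longleftrightarrow> v \<le> j"
proof (cases "v \<le> j")
  case True
  then have vv: "v \<in> set (F1 j h)" using v by (simp add: set_F1)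
  have e: "phi h v = phi (F1 j h) v" by (rule B1[OF True])
  show ?thesis unfolding e using phi_low_bound[OF vv] True by simp
next
  case False
  have "v - j \<in> set (F2 j h)" using v False by (auto simp: set_F2)
  then have "1 \<le> phi (F2 j h) (v - j)" by (rule phi_ge1)
  then show ?thesis using B2[OF C v] False by simp
qed

lemma filter_gt_F2: "filter (\<lambda>v. j < v) h = map (\<lambda>v. v + j) (F2 j h)"
proof -
  have "map (\<lambda>v. v + j) (F2 j h) = map (\<lambda>v. v - j + j) (filter (\<lambda>v. j < v) h)"
    unfolding F2_def by simp
  also have "\<dots> = filter (\<lambda>v. j < v) h" by (rule map_idI) simp
  finally show ?thesis by simp
qed

lemma F1_app: "F1 j (h @ k) = F1 j h @ F1 j k" unfolding F1_def by simp
lemma F2_app: "F2 j (h @ k) = F2 j h @ F2 j k" unfolding F2_def by simp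

lemma len_F2: "length (F2 j h) = length h - length (F1 j h)"
  unfolding F1_def F2_def using filter_le_gt_len[of j h] by simp

lemma F1_le_len: "length (F1 j h) \<le> length h" unfolding F1_def by simp

lemma Jset_pf: "is_pf w \<Longrightarrow> j \<in> Jset w \<longleftrightarrow> length (F1 j w) = j"
  unfolding Jset_def using cut_pf1[of w j] F1_le_len[of j w] by auto

lemma pf_ge1: "is_pf w \<Longrightarrow> y \<in> set w \<Longrightarrow> 1 \<le> y"
  using pf_vals by blast

lemma mset_app_sub: "mset h \<subseteq># mset (h @ k)" "mset k \<subseteq># mset (h @ k)"
  by simp_all

lemma FWD:
  assumes w: "is_pf (h @ k)" and ph: "park h = f" and pk: "park k = g"
    and u: "F1 j (h @ k) = u" and v: "F2 j (h @ k) = v" and lu: "length u = j"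
  shows "length (F1 j h) \<in> Jset f" "length (F1 j k) \<in> Jset g"
    "F1 (length (F1 j h)) f = park (F1 j h)" "F2 (length (F1 j h)) f = park (F2 j h)"
    "F1 (length (F1 j k)) g = park (F1 j k)" "F2 (length (F1 j k)) g = park (F2 j k)"
    "u = F1 j h @ F1 j k" "v = F2 j h @ F2 j k" "CC j h" "CC j k" "is_pf u" "is_pf v"
proof -
  have lw: "length (F1 j (h @ k)) = j" using u lu by simp
  show Ch: "CC j h" by (rule cut_CC[OF w lw mset_app_sub(1)])
  show Ck: "CC j k" by (rule cut_CC[OF w lw mset_app_sub(2)])
  show "u = F1 j h @ F1 j k" using u by (simp add: F1_app)
  show "v = F2 j h @ F2 j k" using v by (simp add: F2_app)
  show pu: "is_pf u" using cut_pf1[OF w lw] u by simp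
  show "is_pf v" using cut_pf1[OF w lw] v by simp
  show "F1 (length (F1 j h)) f = park (F1 j h)" "F2 (length (F1 j h)) f = park (F2 j h)"
    using forward_park[OF Ch] ph by simp_all
  show "F1 (length (F1 j k)) g = park (F1 j k)" "F2 (length (F1 j k)) g = park (F2 j k)"
    using forward_park[OF Ck] pk by simp_all
  show "length (F1 j h) \<in> Jset f"
    unfolding Jset_def using forward_park[OF Ch] ph is_pf_park F1_le_len[of j h] park_length[of h] by auto
  show "length (F1 j k) \<in> Jset g"
    unfolding Jset_def using forward_park[OF Ck] pk is_pf_park F1_le_len[of j k] park_length[of k] by auto
qed


lemma F2_Nil_F1: "F2 j h = [] \<Longrightarrow> F1 j h = h"
  unfolding F1_def F2_def by (auto simp: filter_empty_conv not_less intro!: filter_True)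

lemma F2_Nil_iff: "F2 j h = [] \<longleftrightarrow> (\<forall>y\<in>set h. y \<le> j)"
  unfolding F2_def by (auto simp: filter_empty_conv not_less)

lemma F1_len_Jset: "i \<in> Jset f \<Longrightarrow> length (F1 i f) = i" unfolding Jset_def by simp
lemma F2_len_Jset: "i \<in> Jset f \<Longrightarrow> length (F2 i f) = length f - i"
  using len_F2[of i f] F1_len_Jset by simp

locale basis =
  fixes q :: "'a::comm_ring_1" and R :: "nat \<Rightarrow> nat \<Rightarrow> bool" and e :: "nat \<Rightarrow> 'a"
    and X :: "nat list \<Rightarrow> nat list \<Rightarrow> (nat list \<Rightarrow>\<^sub>0 'a)"
    and f g u v :: "nat list" and j :: nat
  assumes lu: "length u = j" and Rord: "\<And>a b a' b'. (a < b \<longleftrightarrow> a' < b') \<Longrightarrow> (a = b \<longleftrightarrow> a' = b') \<Longrightarrow> R a b = R a' b'"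
    and HE: "\<And>c1 c2 a b. R a b \<Longrightarrow> (a = b \<Longrightarrow> 1 \<le> c2) \<Longrightarrow> e (c1 + c2) = q ^ c1 * e c2"
    and EXT: "\<And>a c w. is_pf a \<Longrightarrow> is_pf c \<Longrightarrow> a \<noteq> [] \<or> c \<noteq> [] \<Longrightarrow>
       Poly_Mapping.lookup (X a c) w = (if length w = length a + length c \<and> is_pf w \<and> park (take (length a) w) = a \<and>
          park (drop (length a) w) = c \<and> R (MM (take (length a) w)) (MM (drop (length a) w))
        then e (cap (take (length a) w) (drop (length a) w)) else 0)"
    and pff: "is_pf f" "f \<noteq> []" and pfg: "is_pf g" "g \<noteq> []"
begin

definition PP' where "PP' = {(h, k) \<in> park_pairs R f g. F1 j (h @ k) = u \<and> F2 j (h @ k) = v}"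
definition \<Phi> :: "nat list \<times> nat list \<Rightarrow> nat \<times> nat" where "\<Phi> p = (length (F1 j (fst p)), length (F1 j (snd p)))"
definition T where "T p = Poly_Mapping.lookup (compat_b q X (F1 (fst p) f, F2 (fst p) f) (F1 (snd p) g, F2 (snd p) g)) (u, v)"

lemma PP'_finite: "finite PP'"
  unfolding PP'_def by (rule finite_subset[OF _ park_pairs_finite[of R f g]]) auto

lemma PP'_D:
  assumes "(h, k) \<in> PP'"
  shows "is_pf (h @ k)" "park h = f" "park k = g" "R (Max (set h)) (Max (set k))"
    "F1 j (h @ k) = u" "F2 j (h @ k) = v" "h \<noteq> []" "k \<noteq> []" "length h = length f" "length k = length g"
  using assms pff pfg unfolding PP'_def park_pairs_def by (auto dest: park_len_eq)

lemma vals_ge1: assumes "(h, k) \<in> PP'" shows "\<forall>y\<in>set h. 1 \<le> y" "\<forall>y\<in>set k. 1 \<le> y"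
  using pf_ge1[OF PP'_D(1)[OF assms]] by auto

lemma cmpR:
  assumes hk: "(h, k) \<in> PP'" and ne: "F2 j h \<noteq> [] \<or> F2 j k \<noteq> []"
  shows "R (MM (F2 j h)) (MM (F2 j k)) = R (Max (set h)) (Max (set k))"
  using cmp_split[OF PP'_D(7) vals_ge1(1) PP'_D(8) vals_ge1(2), OF hk hk hk hk ne]
  by (intro Rord) auto

lemma FW:
  assumes hk: "(h, k) \<in> PP'"
  shows "\<Phi> (h, k) \<in> Jset f \<times> Jset g" "T (\<Phi> (h, k)) = e (cap h k)"
proof -
  note D = PP'_D[OF hk]
  let ?i = "length (F1 j h)" and ?l = "length (F1 j k)"
  note F = FWD[OF D(1) D(2) D(3) D(5) D(6) lu]
  show "\<Phi> (h, k) \<in> Jset f \<times> Jset g" unfolding \<Phi>_def using F by simp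
  have li: "length (F1 ?i f) = ?i" "length (F1 ?l g) = ?l" using F(3,5) by simp_all
  show "T (\<Phi> (h, k)) = e (cap h k)"
  proof (cases "F2 j h = [] \<and> F2 j k = []")
    case True
    have fh: "F1 j h = h" "F1 j k = k" using True F2_Nil_F1 by auto
    have ff: "F1 ?i f = f" "F1 ?l g = g" "F2 ?i f = []" "F2 ?l g = []" using F(3-6) True fh D(2,3) by simp_all
    have uv: "u = h @ k" "v = []" using F(7,8) True fh by simp_all
    have "T (\<Phi> (h, k)) = Poly_Mapping.lookup (X f g) u * Poly_Mapping.lookup (Poly_Mapping.single [] 1) v"
      unfolding T_def \<Phi>_def compat_b_def using ff by (simp add: lookup_tens)
    also have "Poly_Mapping.lookup (X f g) u = e (cap h k)"
      using EXT[OF pff(1) pfg(1)] pff(2) pfg(2) D uv F(11) by (simp add: MM_def)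
    finally show ?thesis using uv by simp
  next
    case False
    have ne2: "F2 ?i f \<noteq> [] \<or> F2 ?l g \<noteq> []" using False F(4,6) by simp
    have pf1: "is_pf (F1 ?i f)" "is_pf (F1 ?l g)" "is_pf (F2 ?i f)" "is_pf (F2 ?l g)"
      using F(3-6) is_pf_park by simp_all
    have "T (\<Phi> (h, k)) = Poly_Mapping.lookup (ext_star q (F1 ?i f) (F1 ?l g)) u *
        Poly_Mapping.lookup (X (F2 ?i f) (F2 ?l g)) v"
    proof -
      have nn: "\<not> (F2 ?i f = [] \<and> F2 ?l g = [])" using ne2 by blast
      show ?thesis unfolding T_def \<Phi>_def compat_b_def fst_conv snd_conv if_not_P[OF nn] by (rule lookup_tens)
    qed
    also have "Poly_Mapping.lookup (ext_star q (F1 ?i f) (F1 ?l g)) u = q ^ cap (F1 j h) (F1 j k)"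
    proof -
      have tu: "take ?i u = F1 j h" "drop ?i u = F1 j k" "length u = ?i + ?l" using F(7) by simp_all
      show ?thesis using lookup_ext_star[OF pf1(1,2), of q u] li tu F(3,5,11) by simp
    qed
    also have "Poly_Mapping.lookup (X (F2 ?i f) (F2 ?l g)) v = e (cap (F2 j h) (F2 j k))"
    proof -
      have lf: "length (F2 ?i f) = length (F2 j h)" "length (F2 ?l g) = length (F2 j k)" using F(4,6) by simp_all
      have tv: "take (length (F2 j h)) v = F2 j h" "drop (length (F2 j h)) v = F2 j k" "length v = length (F2 j h) + length (F2 j k)"
        using F(8) by simp_all
      show ?thesis using EXT[OF pf1(3,4) ne2, of v] lf tv F(4,6,12) D(4) cmpR[OF hk] False by simp
    qed
    also have "q ^ cap (F1 j h) (F1 j k) * e (cap (F2 j h) (F2 j k)) = e (cap h k)"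
    proof -
      have R2: "R (MM (F2 j h)) (MM (F2 j k))" using cmpR[OF hk] False D(4) by simp
      have "MM (F2 j h) = MM (F2 j k) \<Longrightarrow> 1 \<le> cap (F2 j h) (F2 j k)"
      proof -
        assume eq: "MM (F2 j h) = MM (F2 j k)"
        have pos: "F2 j h \<noteq> [] \<Longrightarrow> 1 \<le> MM (F2 j h)" "F2 j k \<noteq> [] \<Longrightarrow> 1 \<le> MM (F2 j k)"
          using MM_split(3)[OF D(7) vals_ge1(1)[OF hk]] MM_split(3)[OF D(8) vals_ge1(2)[OF hk]] by auto
        have ne: "F2 j h \<noteq> []" "F2 j k \<noteq> []" using pos eq False by (auto simp: MM_def)
        have m1: "Max (set (F2 j h)) \<in> set (F2 j h)" "Max (set (F2 j k)) \<in> set (F2 j k)" using ne by simp_all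
        have "MM (F2 j h) = Max (set (F2 j h))" "MM (F2 j k) = Max (set (F2 j k))" using ne by (simp_all add: MM_def)
        then have "MM (F2 j h) \<in> set (F2 j h)" "MM (F2 j h) \<in> set (F2 j k)" using m1 eq by simp_all
        then have "MM (F2 j h) \<in> set (F2 j h) \<inter> set (F2 j k)" by simp
        then have "0 < card (set (F2 j h) \<inter> set (F2 j k))" by (intro card_gt_0_iff[THEN iffD2]) auto
        then show ?thesis unfolding cap_def by simp
      qed
      then show ?thesis using HE[OF R2] cap_split[of h k j] by simp
    qed
    finally show ?thesis .
  qed
qed

end

context basis begin

lemma recon:
  assumes hk: "(h, k) \<in> PP'"
  shows "h = mrg (length (F1 j h)) f (take (length (F1 j h)) u) (map (\<lambda>x. x + j) (take (length f - length (F1 j h)) v))"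
    "k = mrg (length (F1 j k)) g (drop (length (F1 j h)) u) (map (\<lambda>x. x + j) (drop (length f - length (F1 j h)) v))"
proof -
  note D = PP'_D[OF hk]
  note F = FWD[OF D(1) D(2) D(3) D(5) D(6) lu]
  let ?i = "length (F1 j h)" and ?l = "length (F1 j k)"
  have lF2: "length (F2 j h) = length f - ?i" using len_F2[of j h] D(9) by simp
  have tu: "take ?i u = F1 j h" "drop ?i u = F1 j k" using F(7) by simp_all
  have tv: "take (length f - ?i) v = F2 j h" "drop (length f - ?i) v = F2 j k" using F(8) lF2 by simp_all
  have uh: "mrg ?i f (filter (\<lambda>x. x \<le> j) h) (filter (\<lambda>x. j < x) h) = h"
  proof (rule mrg_unique)
    show "length h = length f" by (rule D(9))
    show "\<forall>p<length f. h ! p \<le> j \<longleftrightarrow> f ! p \<le> ?i"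
    proof (intro allI impI)
      fix p assume p: "p < length f"
      have fe: "f = map (phi h) h" unfolding D(2)[symmetric] park_eq by (rule refl)
      have "f ! p = phi h (h ! p)" using p D(9) by (subst fe) simp
      moreover have "h ! p \<in> set h" using p D(9) by simp
      ultimately show "h ! p \<le> j \<longleftrightarrow> f ! p \<le> ?i" using lowiff_CC[OF F(9)] by simp
    qed
  qed
  then show "h = mrg ?i f (take ?i u) (map (\<lambda>x. x + j) (take (length f - ?i) v))"
    unfolding tu tv filter_gt_F2[symmetric] by (simp add: F1_def)
  have uk: "mrg ?l g (filter (\<lambda>x. x \<le> j) k) (filter (\<lambda>x. j < x) k) = k"
  proof (rule mrg_unique)
    show "length k = length g" by (rule D(10))
    show "\<forall>p<length g. k ! p \<le> j \<longleftrightarrow> g ! p \<le> ?l"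
    proof (intro allI impI)
      fix p assume p: "p < length g"
      have ge: "g = map (phi k) k" unfolding D(3)[symmetric] park_eq by (rule refl)
      have "g ! p = phi k (k ! p)" using p D(10) by (subst ge) simp
      moreover have "k ! p \<in> set k" using p D(10) by simp
      ultimately show "k ! p \<le> j \<longleftrightarrow> g ! p \<le> ?l" using lowiff_CC[OF F(10)] by simp
    qed
  qed
  then show "k = mrg ?l g (drop ?i u) (map (\<lambda>x. x + j) (drop (length f - ?i) v))"
    unfolding tu tv filter_gt_F2[symmetric] by (simp add: F1_def)
qed

lemma INJ: "inj_on \<Phi> PP'"
proof (rule inj_onI)
  fix p p' assume p: "p \<in> PP'" "p' \<in> PP'" "\<Phi> p = \<Phi> p'"
  obtain h k where hk: "p = (h, k)" by (cases p)
  obtain h' k' where hk': "p' = (h', k')" by (cases p')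
  have e: "length (F1 j h) = length (F1 j h')" "length (F1 j k) = length (F1 j k')"
    using p(3) unfolding hk hk' \<Phi>_def by simp_all
  have "h = h'" using recon(1)[OF p(1)[unfolded hk]] recon(1)[OF p(2)[unfolded hk']] e by simp
  moreover have "k = k'" using recon(2)[OF p(1)[unfolded hk]] recon(2)[OF p(2)[unfolded hk']] e by simp
  ultimately show "p = p'" using hk hk' by simp
qed

end

context basis begin

lemma SURJ:
  assumes pJ: "p \<in> Jset f \<times> Jset g" and Tp: "T p \<noteq> 0"
  shows "p \<in> \<Phi> ` PP'"
proof -
  obtain i l where p: "p = (i, l)" and iJ: "i \<in> Jset f" and lJ: "l \<in> Jset g" using pJ by auto
  have li: "length (F1 i f) = i" "length (F1 l g) = l" using iJ lJ by (simp_all add: F1_len_Jset)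
  have l2: "length (F2 i f) = length f - i" "length (F2 l g) = length g - l"
    using iJ lJ by (simp_all add: F2_len_Jset)
  have pfs: "is_pf (F1 i f)" "is_pf (F2 i f)" "is_pf (F1 l g)" "is_pf (F2 l g)"
    using iJ lJ unfolding Jset_def by auto
  have uj: "\<forall>a\<in>set u. a \<le> j" if "is_pf u" using pf_vals[OF that] lu by auto
  show ?thesis
  proof (cases "F2 i f = [] \<and> F2 l g = []")
    case True
    have ff: "F1 i f = f" "F1 l g = g" using True F2_Nil_F1 by auto
    have ifl: "i = length f" "l = length g" using li ff by auto
    have "T p = Poly_Mapping.lookup (X f g) u * Poly_Mapping.lookup (Poly_Mapping.single [] 1) v"
      unfolding T_def p using True ff by (simp add: compat_b_def lookup_tens)
    then have nz: "Poly_Mapping.lookup (X f g) u \<noteq> 0" "v = []" using Tp by (auto simp: lookup_single when_def split: if_splits)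
    let ?h = "take (length f) u" and ?k = "drop (length f) u"
    have c: "length u = length f + length g" "is_pf u" "park ?h = f" "park ?k = g" "R (MM ?h) (MM ?k)"
      using nz(1) EXT[OF pff(1) pfg(1), of u] pff(2) by (auto split: if_splits)
    have ne: "?h \<noteq> []" "?k \<noteq> []" using c(1) pff(2) pfg(2) by auto
    have F2u: "F2 j u = []" using uj[OF c(2)] by (simp add: F2_Nil_iff)
    have F1u: "F1 j u = u" using F2_Nil_F1[OF F2u] .
    have hk: "(?h, ?k) \<in> PP'"
      unfolding PP'_def park_pairs_def using c ne F1u F2u nz(2) by (simp add: MM_def)
    have sh: "\<forall>y\<in>set ?h. y \<le> j" "\<forall>y\<in>set ?k. y \<le> j" using uj[OF c(2)] by (auto dest: in_set_takeD in_set_dropD)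
    have "\<Phi> (?h, ?k) = (length ?h, length ?k)" unfolding \<Phi>_def
      using F2_Nil_F1 F2_Nil_iff sh by (metis fst_conv snd_conv)
    also have "\<dots> = p" using p ifl c(1) by simp
    finally show ?thesis using hk by force
  next
    case False
    have nn: "\<not> (F2 i f = [] \<and> F2 l g = [])" using False .
    have "T p = Poly_Mapping.lookup (ext_star q (F1 i f) (F1 l g)) u * Poly_Mapping.lookup (X (F2 i f) (F2 l g)) v"
      unfolding T_def p compat_b_def fst_conv snd_conv if_not_P[OF nn] by (rule lookup_tens)
    then have nz: "Poly_Mapping.lookup (ext_star q (F1 i f) (F1 l g)) u \<noteq> 0" "Poly_Mapping.lookup (X (F2 i f) (F2 l g)) v \<noteq> 0"
      using Tp by auto
    have ne2: "F2 i f \<noteq> [] \<or> F2 l g \<noteq> []" using False by simp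
    have es: "length u = i + l" "is_pf u" "park (take i u) = F1 i f" "park (drop i u) = F1 l g"
      using nz(1) lookup_ext_star[OF pfs(1,3), of q u] li by (auto split: if_splits)
    let ?n = "length f - i"
    have xs: "length v = ?n + (length g - l)" "is_pf v" "park (take ?n v) = F2 i f" "park (drop ?n v) = F2 l g"
        "R (MM (take ?n v)) (MM (drop ?n v))"
      using nz(2) EXT[OF pfs(2,4) ne2, of v] l2 by (auto split: if_splits)
    define A where "A = take i u"
    define A2 where "A2 = drop i u"
    define B where "B = map (\<lambda>x. x + j) (take ?n v)"
    define B2 where "B2 = map (\<lambda>x. x + j) (drop ?n v)"
    define h where "h = mrg i f A B"
    define k where "k = mrg l g A2 B2"
    have vu: "\<forall>a\<in>set u. a \<le> j" by (rule uj[OF es(2)])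
    have vv: "\<forall>b\<in>set v. 1 \<le> b" using pf_vals[OF xs(2)] by auto
    have vA: "\<forall>a\<in>set A. a \<le> j" "\<forall>a\<in>set A2. a \<le> j" using vu unfolding A_def A2_def
      by (auto dest: in_set_takeD in_set_dropD)
    have vB: "\<forall>b\<in>set B. j < b" "\<forall>b\<in>set B2. j < b" using vv unfolding B_def B2_def
      by (auto dest!: in_set_takeD in_set_dropD)
    have lA: "length A = length (filter (\<lambda>x. x \<le> i) f)" "length A2 = length (filter (\<lambda>x. x \<le> l) g)"
      using li es(1) unfolding A_def A2_def F1_def by simp_all
    have lB: "length B = length (filter (\<lambda>x. i < x) f)" "length B2 = length (filter (\<lambda>x. l < x) g)"
      using filter_le_gt_len[of i f] filter_le_gt_len[of l g] li xs(1) unfolding B_def B2_def F1_def by simp_all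
    have mh: "filter (\<lambda>x. x \<le> j) h = A \<and> filter (\<lambda>x. j < x) h = B"
      unfolding h_def by (rule mrg_filter[OF vA(1) vB(1) lA(1) lB(1)])
    have mk: "filter (\<lambda>x. x \<le> j) k = A2 \<and> filter (\<lambda>x. j < x) k = B2"
      unfolding k_def by (rule mrg_filter[OF vA(2) vB(2) lA(2) lB(2)])
    have F1h: "F1 j h = A" "F1 j k = A2" using mh mk unfolding F1_def by simp_all
    have F2h: "F2 j h = take ?n v" "F2 j k = drop ?n v" using mh mk unfolding F2_def B_def B2_def by (simp_all add: o_def)
    have Fw: "F1 j (h @ k) = u" "F2 j (h @ k) = v" unfolding F1_app F2_app F1h F2h A_def A2_def by simp_all
    have lw: "length (F1 j (h @ k)) = j" using Fw lu by simp
    have pw: "is_pf (h @ k)" by (rule cut_pf2[OF _ _ lw]) (simp_all add: Fw es(2) xs(2))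
    have Ch: "CC j h" by (rule cut_CC[OF pw lw mset_app_sub(1)])
    have Ck: "CC j k" by (rule cut_CC[OF pw lw mset_app_sub(2)])
    have ph: "park h = f" unfolding h_def
    proof (rule reconstruct[OF li(1) vA(1) vB(1)])
      show "length A = length (F1 i f)" using li es(1) unfolding A_def by simp
      show "length B = length (filter (\<lambda>v. i < v) f)" by (rule lB(1))
      show "CC j (mrg i f A B)" using Ch unfolding h_def .
      show "park A = F1 i f" unfolding A_def by (rule es(3))
      show "park (map (\<lambda>v. v - j) B) = F2 i f" unfolding B_def using xs(3) by (simp add: o_def)
    qed
    have pk: "park k = g" unfolding k_def
    proof (rule reconstruct[OF li(2) vA(2) vB(2)])
      show "length A2 = length (F1 l g)" using li es(1) unfolding A2_def by simp
      show "length B2 = length (filter (\<lambda>v. l < v) g)" by (rule lB(2))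
      show "CC j (mrg l g A2 B2)" using Ck unfolding k_def .
      show "park A2 = F1 l g" unfolding A2_def by (rule es(4))
      show "park (map (\<lambda>v. v - j) B2) = F2 l g" unfolding B2_def using xs(4) by (simp add: o_def)
    qed
    have lhk: "length h = length f" "length k = length g" unfolding h_def k_def by simp_all
    have hne: "h \<noteq> []" "k \<noteq> []"
    proof -
      show "h \<noteq> []" proof assume "h = []" then show False using lhk(1) pff(2) by simp qed
      show "k \<noteq> []" proof assume "k = []" then show False using lhk(2) pfg(2) by simp qed
    qed
    have g1: "\<forall>y\<in>set h. 1 \<le> y" "\<forall>y\<in>set k. 1 \<le> y" using pf_ge1[OF pw] by auto
    have lens: "length (F2 j h) = length (F2 i f)" "length (F2 j k) = length (F2 l g)" using F2h l2 xs(1) by simp_all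
    have neF: "F2 j h \<noteq> [] \<or> F2 j k \<noteq> []"
    proof (rule ccontr)
      assume "\<not> (F2 j h \<noteq> [] \<or> F2 j k \<noteq> [])"
      then have "length (F2 i f) = 0" "length (F2 l g) = 0" using lens by simp_all
      then show False using ne2 by simp
    qed
    have "R (Max (set h)) (Max (set k))"
    proof -
      have "(Max (set h) < Max (set k) \<longleftrightarrow> MM (F2 j h) < MM (F2 j k)) \<and>
            (Max (set h) = Max (set k) \<longleftrightarrow> MM (F2 j h) = MM (F2 j k))"
        by (rule cmp_split[OF hne(1) g1(1) hne(2) g1(2) neF])
      then have "R (MM (F2 j h)) (MM (F2 j k)) = R (Max (set h)) (Max (set k))" by (intro Rord) auto
      then show ?thesis using xs(5) F2h by simp
    qed
    then have hk: "(h, k) \<in> PP'" unfolding PP'_def park_pairs_def using pw ph pk Fw by simp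
    have "\<Phi> (h, k) = p" unfolding \<Phi>_def p using F1h li es(1) unfolding A_def A2_def by simp
    then show ?thesis using hk by force
  qed
qed

lemma BASIS_EQ:
  "(\<Sum>(h, k)\<in>park_pairs R f g. e (cap h k) * Poly_Mapping.lookup (cop_b (h @ k)) (u, v)) =
   (\<Sum>i\<in>Jset f. \<Sum>l\<in>Jset g. Poly_Mapping.lookup (compat_b q X (F1 i f, F2 i f) (F1 l g, F2 l g)) (u, v))"
proof -
  have L: "(\<Sum>(h, k)\<in>park_pairs R f g. e (cap h k) * Poly_Mapping.lookup (cop_b (h @ k)) (u, v)) =
        (\<Sum>(h, k)\<in>PP'. e (cap h k))"
  proof -
    have "(\<Sum>(h, k)\<in>park_pairs R f g. e (cap h k) * Poly_Mapping.lookup (cop_b (h @ k)) (u, v)) =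
          (\<Sum>p\<in>park_pairs R f g. if p \<in> PP' then e (cap (fst p) (snd p)) else 0)"
    proof (rule sum.cong[OF refl])
      fix p assume pP: "p \<in> park_pairs R f g"
      obtain h k where p: "p = (h, k)" by (cases p)
      have pw: "is_pf (h @ k)" using pP p unfolding park_pairs_def by simp
      have a: "length u \<in> Jset (h @ k) \<and> F1 (length u) (h @ k) = u \<and> F2 (length u) (h @ k) = v \<longleftrightarrow>
          F1 j (h @ k) = u \<and> F2 j (h @ k) = v"
      proof
        assume "F1 j (h @ k) = u \<and> F2 j (h @ k) = v"
        moreover then have "length (F1 j (h @ k)) = j" using lu by simp
        ultimately show "length u \<in> Jset (h @ k) \<and> F1 (length u) (h @ k) = u \<and> F2 (length u) (h @ k) = v"
          unfolding lu Jset_pf[OF pw] by simp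
      qed (simp add: lu)
      have b: "p \<in> PP' \<longleftrightarrow> F1 j (h @ k) = u \<and> F2 j (h @ k) = v" using pP unfolding PP'_def p by blast
      have "length u \<in> Jset (h @ k) \<and> F1 (length u) (h @ k) = u \<and> F2 (length u) (h @ k) = v \<longleftrightarrow> p \<in> PP'"
        unfolding a b ..
      then show "(case p of (h, k) \<Rightarrow> e (cap h k) * Poly_Mapping.lookup (cop_b (h @ k)) (u, v)) =
          (if p \<in> PP' then e (cap (fst p) (snd p)) else 0)"
        unfolding p by (simp add: lookup_cop_b)
    qed
    also have "\<dots> = (\<Sum>p\<in>{p \<in> park_pairs R f g. p \<in> PP'}. e (cap (fst p) (snd p)))"
      by (rule sum.inter_filter[symmetric]) (rule park_pairs_finite)
    also have "{p \<in> park_pairs R f g. p \<in> PP'} = PP'" unfolding PP'_def by auto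
    finally show ?thesis by (simp add: case_prod_beta)
  qed
  have "(\<Sum>i\<in>Jset f. \<Sum>l\<in>Jset g. Poly_Mapping.lookup (compat_b q X (F1 i f, F2 i f) (F1 l g, F2 l g)) (u, v))
      = (\<Sum>p\<in>Jset f \<times> Jset g. T p)"
    unfolding T_def by (simp add: sum.cartesian_product case_prod_beta)
  also have "\<dots> = (\<Sum>p\<in>\<Phi> ` PP'. T p)"
  proof (rule sum.mono_neutral_right)
    show "finite (Jset f \<times> Jset g)" by (simp add: Jset_finite)
    show "\<Phi> ` PP' \<subseteq> Jset f \<times> Jset g"
    proof
      fix x assume "x \<in> \<Phi> ` PP'"
      then obtain p where p: "p \<in> PP'" "x = \<Phi> p" by blast
      obtain h k where "p = (h, k)" by (cases p)
      then show "x \<in> Jset f \<times> Jset g" using FW(1) p by simp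
    qed
    show "\<forall>p\<in>Jset f \<times> Jset g - \<Phi> ` PP'. T p = 0" using SURJ by blast
  qed
  also have "\<dots> = (\<Sum>p\<in>PP'. T (\<Phi> p))" by (simp add: sum.reindex[OF INJ])
  also have "\<dots> = (\<Sum>(h, k)\<in>PP'. e (cap h k))" by (rule sum.cong[OF refl]) (auto simp: FW(2))
  finally show ?thesis using L by simp
qed

end

lemma basis_succ:
  assumes "is_pf f" "f \<noteq> []" "is_pf g" "g \<noteq> []"
  shows "(\<Sum>(h, k)\<in>park_pairs (\<lambda>a b. a < b) f g. q ^ cap h k * Poly_Mapping.lookup (cop_b (h @ k)) (u, v)) =
   (\<Sum>i\<in>Jset f. \<Sum>l\<in>Jset g. Poly_Mapping.lookup (compat_b q (ext_succ q) (F1 i f, F2 i f) (F1 l g, F2 l g)) (u, v))"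
proof -
  have HE1: "\<And>c1 c2. q ^ (c1 + c2) = q ^ c1 * q ^ c2" by (simp add: power_add)
  interpret basis q "\<lambda>a b. a < b" "\<lambda>c. q ^ c" "ext_succ q" f g u v "length u"
    by (unfold_locales) (auto simp: HE1 lookup_ext_succ assms)
  show ?thesis using BASIS_EQ by simp
qed

lemma basis_prec:
  assumes "is_pf f" "f \<noteq> []" "is_pf g" "g \<noteq> []"
  shows "(\<Sum>(h, k)\<in>park_pairs (\<lambda>a b. a > b) f g. q ^ cap h k * Poly_Mapping.lookup (cop_b (h @ k)) (u, v)) =
   (\<Sum>i\<in>Jset f. \<Sum>l\<in>Jset g. Poly_Mapping.lookup (compat_b q (ext_prec q) (F1 i f, F2 i f) (F1 l g, F2 l g)) (u, v))"
proof -
  have HE1: "\<And>c1 c2. q ^ (c1 + c2) = q ^ c1 * q ^ c2" by (simp add: power_add)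
  interpret basis q "\<lambda>a b. a > b" "\<lambda>c. q ^ c" "ext_prec q" f g u v "length u"
    by (unfold_locales) (auto simp: HE1 lookup_ext_prec assms)
  show ?thesis using BASIS_EQ by simp
qed

lemma basis_dot:
  assumes "is_pf f" "f \<noteq> []" "is_pf g" "g \<noteq> []"
  shows "(\<Sum>(h, k)\<in>park_pairs (\<lambda>a b. a = b) f g. q ^ (cap h k - 1) * Poly_Mapping.lookup (cop_b (h @ k)) (u, v)) =
   (\<Sum>i\<in>Jset f. \<Sum>l\<in>Jset g. Poly_Mapping.lookup (compat_b q (ext_dot q) (F1 i f, F2 i f) (F1 l g, F2 l g)) (u, v))"
proof -
  have HE1: "\<And>c1 c2. Suc 0 \<le> c2 \<Longrightarrow> q ^ (c1 + c2 - Suc 0) = q ^ c1 * q ^ (c2 - Suc 0)"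
  proof -
    fix c1 c2 :: nat assume "Suc 0 \<le> c2"
    then have "c1 + c2 - Suc 0 = c1 + (c2 - Suc 0)" by simp
    then show "q ^ (c1 + c2 - Suc 0) = q ^ c1 * q ^ (c2 - Suc 0)" by (simp add: power_add)
  qed
  interpret basis q "\<lambda>a b. a = b" "\<lambda>c. q ^ (c - 1)" "ext_dot q" f g u v "length u"
    by (unfold_locales) (auto simp: HE1 lookup_ext_dot assms)
  show ?thesis using BASIS_EQ by simp
qed

lemma PQS_keys: "x \<in> PQS \<Longrightarrow> f \<in> Poly_Mapping.keys x \<Longrightarrow> is_pf f \<and> f \<noteq> []"
  unfolding PQS_def by auto

lemma compat_gen:
  assumes BE: "\<And>f g u v. is_pf f \<Longrightarrow> f \<noteq> [] \<Longrightarrow> is_pf g \<Longrightarrow> g \<noteq> [] \<Longrightarrow>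
      (\<Sum>(h, k)\<in>park_pairs R f g. e (cap h k) * Poly_Mapping.lookup (cop_b (h @ k)) (u, v)) =
      (\<Sum>i\<in>Jset f. \<Sum>l\<in>Jset g. Poly_Mapping.lookup (compat_b q X (F1 i f, F2 i f) (F1 l g, F2 l g)) (u, v))"
    and x: "x \<in> PQS" and y: "y \<in> PQS"
  shows "Cop (bilin (gprod R (\<lambda>h k. e (cap h k))) x y) = bilinT (compat_b q X) (Cop x) (Cop y)"
proof (rule poly_mapping_eqI)
  fix p0 :: "nat list \<times> nat list"
  obtain u v where p0: "p0 = (u, v)" by (cases p0)
  have "Poly_Mapping.lookup (Cop (bilin (gprod R (\<lambda>h k. e (cap h k))) x y)) (u, v) =
     lin (\<lambda>f. lin (\<lambda>g. \<Sum>(h, k)\<in>park_pairs R f g. e (cap h k) * Poly_Mapping.lookup (cop_b (h @ k)) (u, v)) y) x"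
    unfolding lookup_Cop lin_bilin lin_gprod ..
  also have "\<dots> = lin (\<lambda>f. lin (\<lambda>g. \<Sum>i\<in>Jset f. \<Sum>l\<in>Jset g.
       Poly_Mapping.lookup (compat_b q X (F1 i f, F2 i f) (F1 l g, F2 l g)) (u, v)) y) x"
    by (intro lin_cong BE) (use PQS_keys x y in auto)
  also have "\<dots> = Poly_Mapping.lookup (bilinT (compat_b q X) (Cop x) (Cop y)) (u, v)"
    unfolding lookup_bilinT lin_Cop lin_cop_b
    by (intro lin_cong) (simp add: lin_sumG Jset_finite)
  finally show "Poly_Mapping.lookup (Cop (bilin (gprod R (\<lambda>h k. e (cap h k))) x y)) p0 =
      Poly_Mapping.lookup (bilinT (compat_b q X) (Cop x) (Cop y)) p0" using p0 by simp
qed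

lemma compat_succ: "x \<in> PQS \<Longrightarrow> y \<in> PQS \<Longrightarrow> Cop (Succ q x y) = bilinT (compat_b q (ext_succ q)) (Cop x) (Cop y)"
  unfolding Succ_def succ_b_gprod using compat_gen[where e="\<lambda>c. q ^ c", OF basis_succ] by simp

lemma compat_prec: "x \<in> PQS \<Longrightarrow> y \<in> PQS \<Longrightarrow> Cop (Prec q x y) = bilinT (compat_b q (ext_prec q)) (Cop x) (Cop y)"
  unfolding Prec_def prec_b_gprod using compat_gen[where e="\<lambda>c. q ^ c", OF basis_prec] by simp

lemma compat_dot: "x \<in> PQS \<Longrightarrow> y \<in> PQS \<Longrightarrow> Cop (Dot q x y) = bilinT (compat_b q (ext_dot q)) (Cop x) (Cop y)"
  unfolding Dot_def dot_b_gprod using compat_gen[where e="\<lambda>c. q ^ (c - 1)", OF basis_dot] by simp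


lemma lin_delta: "lin (\<lambda>p. if p = k then 1 else 0) t = Poly_Mapping.lookup t k"
  unfolding lin_def by (simp add: sum.delta in_keys_iff if_distrib[where f="\<lambda>x. _ * x"] cong: if_cong)

lemma counit_single: "counit (Poly_Mapping.single a (1::'a::comm_ring_1)) = (if a = [] then 1 else 0)"
  unfolding counit_def by (simp add: lookup_single when_def)

lemma lookup_counit_id: "Poly_Mapping.lookup (counit_id t) w = Poly_Mapping.lookup t ([], w)"
proof -
  have "Poly_Mapping.lookup (counit_id t) w = lin (\<lambda>p. if p = ([], w) then 1 else 0) t"
    unfolding counit_id_def lin_def lookup_sum
    by (intro sum.cong refl) (auto simp: counit_single lookup_single when_def)
  then show ?thesis by (simp add: lin_delta)
qed

lemma lookup_id_counit: "Poly_Mapping.lookup (id_counit t) w = Poly_Mapping.lookup t (w, [])"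
proof -
  have "Poly_Mapping.lookup (id_counit t) w = lin (\<lambda>p. if p = (w, []) then 1 else 0) t"
    unfolding id_counit_def lin_def lookup_sum
    by (intro sum.cong refl) (auto simp: counit_single lookup_single when_def)
  then show ?thesis by (simp add: lin_delta)
qed

lemma is_pf_Nil: "is_pf []" unfolding is_pf_pfc pfc_def by simp

lemma cb1: assumes "is_pf f"
  shows "Poly_Mapping.lookup (cop_b f :: (nat list \<times> nat list) \<Rightarrow>\<^sub>0 'a::comm_ring_1) ([], w) = (if f = w then 1 else 0)"
proof -
  have v: "\<forall>y\<in>set f. 1 \<le> y" using pf_vals[OF assms] by auto
  have F1: "F1 0 f = []" unfolding F1_def using v by (auto simp: filter_empty_conv)
  have F2: "F2 0 f = f" unfolding F2_def using v by (auto intro!: filter_True)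
  have J: "0 \<in> Jset f" unfolding Jset_def using F1 F2 assms is_pf_Nil by simp
  show ?thesis unfolding lookup_cop_b using J F1 F2 by auto
qed

lemma cb2: assumes "is_pf f"
  shows "Poly_Mapping.lookup (cop_b f :: (nat list \<times> nat list) \<Rightarrow>\<^sub>0 'a::comm_ring_1) (w, []) = (if f = w then 1 else 0)"
proof (cases "f = w")
  case True
  have v: "\<forall>y\<in>set f. y \<le> length f" using pf_vals[OF assms] by auto
  have F2: "F2 (length f) f = []" unfolding F2_Nil_iff using v .
  have F1: "F1 (length f) f = f" using F2_Nil_F1[OF F2] .
  have J: "length f \<in> Jset f" unfolding Jset_def using F1 F2 assms is_pf_Nil by simp
  show ?thesis unfolding lookup_cop_b using True J F1 F2 by simp
next
  case False
  have "\<not> (F1 (length w) f = w \<and> F2 (length w) f = [])"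
    using F2_Nil_F1[of "length w" f] False by auto
  then show ?thesis unfolding lookup_cop_b using False by auto
qed

lemma PQSplus_keys: "x \<in> PQSplus \<Longrightarrow> f \<in> Poly_Mapping.keys x \<Longrightarrow> is_pf f"
  unfolding PQSplus_def by auto

lemma counit_left: "x \<in> PQSplus \<Longrightarrow> counit_id (Cop x) = (x :: nat list \<Rightarrow>\<^sub>0 'a::comm_ring_1)"
proof (rule poly_mapping_eqI)
  fix w assume x: "x \<in> PQSplus"
  have "Poly_Mapping.lookup (counit_id (Cop x)) w = lin (\<lambda>f. Poly_Mapping.lookup (cop_b f) ([], w)) x"
    by (simp add: lookup_counit_id lookup_Cop)
  also have "\<dots> = lin (\<lambda>f. if f = w then 1 else 0) x"
    by (rule lin_cong) (simp add: cb1 PQSplus_keys[OF x])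
  finally show "Poly_Mapping.lookup (counit_id (Cop x)) w = Poly_Mapping.lookup x w" by (simp add: lin_delta)
qed

lemma counit_right: "x \<in> PQSplus \<Longrightarrow> id_counit (Cop x) = (x :: nat list \<Rightarrow>\<^sub>0 'a::comm_ring_1)"
proof (rule poly_mapping_eqI)
  fix w assume x: "x \<in> PQSplus"
  have "Poly_Mapping.lookup (id_counit (Cop x)) w = lin (\<lambda>f. Poly_Mapping.lookup (cop_b f) (w, [])) x"
    by (simp add: lookup_id_counit lookup_Cop)
  also have "\<dots> = lin (\<lambda>f. if f = w then 1 else 0) x"
    by (rule lin_cong) (simp add: cb2 PQSplus_keys[OF x])
  finally show "Poly_Mapping.lookup (id_counit (Cop x)) w = Poly_Mapping.lookup x w" by (simp add: lin_delta)
qed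

lemma Cop_Tens: assumes x: "x \<in> PQSplus" shows "(Cop x :: (nat list \<times> nat list) \<Rightarrow>\<^sub>0 'a::comm_ring_1) \<in> TensPlus"
  unfolding TensPlus_def
proof (intro CollectI subsetI)
  fix p assume "p \<in> Poly_Mapping.keys (Cop x :: (nat list \<times> nat list) \<Rightarrow>\<^sub>0 'a)"
  then have "lin (\<lambda>f. Poly_Mapping.lookup (cop_b f :: (nat list \<times> nat list) \<Rightarrow>\<^sub>0 'a) p) x \<noteq> 0"
    by (simp add: in_keys_iff lookup_Cop)
  then obtain f where "Poly_Mapping.lookup (cop_b f :: (nat list \<times> nat list) \<Rightarrow>\<^sub>0 'a) p \<noteq> 0"
    unfolding lin_def by (metis (no_types, lifting) mult_zero_right sum.neutral)
  moreover obtain a b where p: "p = (a, b)" by (cases p)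
  ultimately have "length a \<in> Jset f \<and> F1 (length a) f = a \<and> F2 (length a) f = b"
    by (simp add: lookup_cop_b split: if_splits)
  then have "is_pf a" "is_pf b" unfolding Jset_def by auto
  then show "case p of (f, g) \<Rightarrow> is_pf f \<and> is_pf g" using p by simp
qed

lemma Cop_one: "Cop (Poly_Mapping.single [] 1) = Poly_Mapping.single ([], []) (1::'a::comm_ring_1)"
proof (rule poly_mapping_eqI)
  fix p
  show "Poly_Mapping.lookup (Cop (Poly_Mapping.single [] 1)) p = Poly_Mapping.lookup (Poly_Mapping.single ([], []) (1::'a)) p"
    unfolding lookup_Cop lin_single by (simp add: cop_b_def)
qed

theorem proposition3p1:
  fixes q :: "'a::field"
  shows "q_tridendriform q PQS (Prec q) (Dot q) (Succ q) \<and> q_tridendriform_bialgebra q"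
proof -
  have T: "q_tridendriform q PQS (Prec q) (Dot q) (Succ q)" by (rule tridend)
  have "q_tridendriform_bialgebra q"
    unfolding q_tridendriform_bialgebra_def
    using T Cop_Tens Cop_one counit_left counit_right compat_succ compat_dot compat_prec
    by blast
  then show ?thesis using T by simp
qed


end
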